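(* If $2n+1>1$, then $B\,\mathrm{J}^+\subsetneq\mathrm{SO}_{2n+1}(F)$.
   Context: $F$ non-archimedean local field of characteristic $0$, ring of integers $\mathcal{O}$, $\mathfrak{p}=\varpi\mathcal{O}$, residue field $k$. $V_n$ has basis $\mathcal{B}_0=(e_1,\dots,e_n,v_0,f_n,\dots,f_1)$ with $\langle e_i,f_j\rangle=\delta_{ij}$, $\langle v_0,v_0\rangle=2$, other pairings $0$, $q(x)=\langle x,x\rangle/2$, $\mathrm{SO}_{2n+1}(F)=\mathrm{SO}(V_n,q)$. $B$ is the standard Borel subgroup (upper triangular elements in $\mathcal{B}_0$). $L=\oplus\mathcal{O}e_i\oplus\oplus\varpi\mathcal{O}f_i\oplus\varpi\mathcal{O}v_0$, $\mathrm{J}=\{g:g(L)=L\}$; for $g\in\mathrm{J}$, reducing its action on $L$ modulo $\mathfrak{p}$ and passing to the quotient of $L/\mathfrak{p}L$ by the kernel (spanned by the image of $\varpi v_0$) of the form induced by $q/\varpi$ gives $\bar g$ in a $2n$-dimensional orthogonal group; $\alpha(g)=\det\bar g$ if $\mathrm{char}\,k\ne2$ and the Dickson–Dieudonné determinant of $\bar g$ if $\mathrm{char}\,k=2$; $\mathrm{J}^+=\ker\alpha$. *)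

theory Defs
  imports "Jordan_Normal_Form.DL_Rank"
begin

section \<open>Non-archimedean local fields of characteristic 0\<close>

text \<open>A (normalised, discrete) valuation is a function v on F whose value at 0 is irrelevant;
  the set of x with x = 0 or N <= v x is the ideal p^N (N = 0: the ring of integers O,
  N = 1: the maximal ideal p).\<close>

definition vball :: "('a::field \<Rightarrow> int) \<Rightarrow> int \<Rightarrow> 'a set" where
  "vball v N = {x. x = 0 \<or> N \<le> v x}"

abbreviation Oring :: "('a::field \<Rightarrow> int) \<Rightarrow> 'a set" where
  "Oring v \<equiv> vball v 0"

abbreviation pideal :: "('a::field \<Rightarrow> int) \<Rightarrow> 'a set" where
  "pideal v \<equiv> vball v 1"

text \<open>F (a type of class field_char_0) with normalised discrete valuation v is a
  non-archimedean local field (complete, finite residue field), and res : O -> k is the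
  reduction map onto the residue field k = O/p (a field type).\<close>

definition nonarch_local_field_char0 ::
  "('a::field_char_0 \<Rightarrow> int) \<Rightarrow> ('a \<Rightarrow> 'k::field) \<Rightarrow> bool" where
  "nonarch_local_field_char0 v res \<longleftrightarrow>
     (\<forall>x y. x \<noteq> 0 \<longrightarrow> y \<noteq> 0 \<longrightarrow> v (x * y) = v x + v y)
   \<and> (\<forall>x y. x \<noteq> 0 \<longrightarrow> y \<noteq> 0 \<longrightarrow> x + y \<noteq> 0 \<longrightarrow> min (v x) (v y) \<le> v (x + y))
   \<and> (\<exists>w. w \<noteq> 0 \<and> v w = 1)
   \<and> (\<forall>s :: nat \<Rightarrow> 'a.
        (\<forall>N. \<exists>M. \<forall>i\<ge>M. \<forall>j\<ge>M. s i - s j \<in> vball v N)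
        \<longrightarrow> (\<exists>l. \<forall>N. \<exists>M. \<forall>i\<ge>M. s i - l \<in> vball v N))
   \<and> (\<forall>x\<in>Oring v. \<forall>y\<in>Oring v. res (x + y) = res x + res y \<and> res (x * y) = res x * res y)
   \<and> res 1 = 1
   \<and> res ` Oring v = UNIV
   \<and> (\<forall>x\<in>Oring v. res x = 0 \<longleftrightarrow> x \<in> pideal v)
   \<and> finite (UNIV :: 'k set)"

section \<open>The quadratic space V_n and SO_{2n+1}(F)\<close>

text \<open>Coordinates w.r.t. B_0 = (e_1,...,e_n,v_0,f_n,...,f_1): index i-1 is e_i, index n is v_0,
  index 2n+1-i is f_i.  Gram matrix of the bilinear form.\<close>

definition gram :: "nat \<Rightarrow> 'a::field mat" where
  "gram n = mat (2*n+1) (2*n+1)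
     (\<lambda>(i,j). if i + j = 2*n then (if i = n then 2 else 1) else 0)"

definition qform :: "nat \<Rightarrow> 'a::field vec \<Rightarrow> 'a" where
  "qform n x = (x \<bullet> (gram n *\<^sub>v x)) / 2"

definition SO_odd :: "nat \<Rightarrow> 'a::field mat set" where
  "SO_odd n = {g \<in> carrier_mat (2*n+1) (2*n+1). det g = 1 \<and>
                 (\<forall>x \<in> carrier_vec (2*n+1). qform n (g *\<^sub>v x) = qform n x)}"

text \<open>Standard Borel: upper triangular elements (w.r.t. B_0).\<close>

definition Borel :: "nat \<Rightarrow> 'a::field mat set" where
  "Borel n = {g \<in> SO_odd n. \<forall>i < 2*n+1. \<forall>j < i. g $$ (i, j) = 0}"

section \<open>The lattice L, its stabiliser J and the subgroup J^+\<close>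

definition lattice_L :: "('a::field \<Rightarrow> int) \<Rightarrow> nat \<Rightarrow> 'a vec set" where
  "lattice_L v n = {x \<in> carrier_vec (2*n+1).
      \<forall>i < 2*n+1. x $ i \<in> (if i < n then Oring v else pideal v)}"

definition J_stab :: "('a::field \<Rightarrow> int) \<Rightarrow> nat \<Rightarrow> 'a mat set" where
  "J_stab v n = {g \<in> SO_odd n. (\<lambda>x. g *\<^sub>v x) ` lattice_L v n = lattice_L v n}"

text \<open>The O-basis (e_1,...,e_n, w v_0, w f_n, ..., w f_1) of L is given by the columns of
  the diagonal matrix Lbasis; the matrix of g on L in this basis is Lbasis^-1 g Lbasis.\<close>

definition Lbasis :: "'a::field \<Rightarrow> nat \<Rightarrow> 'a mat" where
  "Lbasis w n = mat (2*n+1) (2*n+1) (\<lambda>(i,j). if i = j then (if i < n then 1 else w) else 0)"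

definition Lbasis_inv :: "'a::field \<Rightarrow> nat \<Rightarrow> 'a mat" where
  "Lbasis_inv w n = mat (2*n+1) (2*n+1) (\<lambda>(i,j). if i = j then (if i < n then 1 else inverse w) else 0)"

text \<open>g bar: reduce the action of g on L modulo p (matrix over k in the basis of L/pL given by
  the images of the basis above), then pass to the quotient of L/pL by the line spanned by
  the image of w v_0 (index n): the matrix of the induced map on the quotient, in the basis of
  images of the remaining basis vectors, is obtained by deleting row n and column n.\<close>

definition red_bar :: "('a::field \<Rightarrow> 'k::field) \<Rightarrow> 'a \<Rightarrow> nat \<Rightarrow> 'a mat \<Rightarrow> 'k mat" where
  "red_bar res w n g = mat_delete (map_mat res (Lbasis_inv w n * g * Lbasis w n)) n n"

text \<open>Dickson (Dickson--Dieudonne) invariant of an element h of an orthogonal group of a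
  nondegenerate quadratic space of dimension m over a field: rank(h - 1) mod 2 (in Z/2Z,
  represented by 0/1).\<close>

definition dickson_inv :: "nat \<Rightarrow> 'k::field mat \<Rightarrow> nat" where
  "dickson_inv m h = vec_space.rank m (h - 1\<^sub>m m) mod 2"

text \<open>J^+ = ker alpha, with alpha(g) = det(g bar) if char k <> 2 and the Dickson invariant of
  g bar if char k = 2.\<close>

definition J_plus :: "('a::field \<Rightarrow> int) \<Rightarrow> ('a \<Rightarrow> 'k::field) \<Rightarrow> 'a \<Rightarrow> nat \<Rightarrow> 'a mat set" where
  "J_plus v res w n = {g \<in> J_stab v n.
      if (2::'k) \<noteq> 0 then det (red_bar res w n g) = 1
      else dickson_inv (2*n) (red_bar res w n g) = 0}"

end

theory Submission
  imports Defs "HOL-Library.FuncSet"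
begin

(* ---- Core ---- *)


definition Midset :: "nat \<Rightarrow> nat \<Rightarrow> (nat \<Rightarrow> 'k::field) set" where
  "Midset m a = {x. \<forall>i. (i < a \<or> 2*m - a \<le> i) \<longrightarrow> x i = 0}"

definition prj :: "nat \<Rightarrow> nat \<Rightarrow> (nat \<Rightarrow> 'k::field) \<Rightarrow> nat \<Rightarrow> 'k" where
  "prj m a x = (\<lambda>i. if a \<le> i \<and> i < 2*m - a then x i else 0)"

definition mv :: "nat \<Rightarrow> (nat \<Rightarrow> nat \<Rightarrow> 'k::field) \<Rightarrow> (nat \<Rightarrow> 'k) \<Rightarrow> nat \<Rightarrow> 'k" where
  "mv m U x = (\<lambda>i. \<Sum>j<2*m. U i j * x j)"

definition Qf :: "nat \<Rightarrow> (nat \<Rightarrow> 'k::field) \<Rightarrow> 'k" where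
  "Qf m x = (\<Sum>i<m. x i * x (2*m-1-i))"

definition Bf :: "nat \<Rightarrow> (nat \<Rightarrow> 'k::field) \<Rightarrow> (nat \<Rightarrow> 'k) \<Rightarrow> 'k" where
  "Bf m x y = (\<Sum>i<m. x i * y (2*m-1-i) + y i * x (2*m-1-i))"

definition ev :: "nat \<Rightarrow> nat \<Rightarrow> 'k::field" where
  "ev j = (\<lambda>i. if i = j then 1 else 0)"

lemma Bf_sym: "Bf m x y = Bf m y x"
  unfolding Bf_def by (simp add: algebra_simps)

lemma Bf_add_left: "Bf m (\<lambda>i. x i + y i) z = Bf m x z + Bf m y z"
  unfolding Bf_def by (simp add: algebra_simps sum.distrib)

lemma Bf_add_right: "Bf m z (\<lambda>i. x i + y i) = Bf m z x + Bf m z y"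
  unfolding Bf_def by (simp add: algebra_simps sum.distrib)

lemma Bf_smult_left: "Bf m (\<lambda>i. c * x i) z = c * Bf m x z"
  unfolding Bf_def by (simp add: algebra_simps sum_distrib_left)

lemma Bf_smult_right: "Bf m z (\<lambda>i. c * x i) = c * Bf m z x"
  unfolding Bf_def by (simp add: algebra_simps sum_distrib_left)

lemma Bf_diff_left: "Bf m (\<lambda>i. x i - y i) z = Bf m x z - Bf m y z"
  unfolding Bf_def by (simp add: algebra_simps sum_subtractf)

lemma Bf_diff_right: "Bf m z (\<lambda>i. x i - y i) = Bf m z x - Bf m z y"
  unfolding Bf_def by (simp add: algebra_simps sum_subtractf)

lemma Qf_add: "Qf m (\<lambda>i. x i + y i) = Qf m x + Qf m y + Bf m x y"
  unfolding Qf_def Bf_def by (simp add: algebra_simps sum.distrib)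

lemma Qf_smult: "Qf m (\<lambda>i. c * x i) = c * c * Qf m x"
  unfolding Qf_def by (simp add: algebra_simps sum_distrib_left)

lemma Bf_self: "Bf m x x = 2 * Qf m x"
  unfolding Qf_def Bf_def by (simp add: algebra_simps sum_distrib_left)

lemma mv_add: "mv m U (\<lambda>i. x i + y i) = (\<lambda>i. mv m U x i + mv m U y i)"
  unfolding mv_def by (simp add: algebra_simps sum.distrib)

lemma mv_diff: "mv m U (\<lambda>i. x i - y i) = (\<lambda>i. mv m U x i - mv m U y i)"
  unfolding mv_def by (simp add: algebra_simps sum_subtractf)

lemma mv_smult: "mv m U (\<lambda>i. c * x i) = (\<lambda>i. c * mv m U x i)"
  unfolding mv_def by (simp add: algebra_simps sum_distrib_left)

lemma mv_ev: "j < 2*m \<Longrightarrow> mv m U (ev j) i = U i j"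
  unfolding mv_def ev_def by (simp add: if_distrib cong: if_cong)

lemma Midset_mono: "a \<le> b \<Longrightarrow> Midset m b \<subseteq> Midset m a"
  unfolding Midset_def by auto

lemma Midset_add: "x \<in> Midset m a \<Longrightarrow> y \<in> Midset m a \<Longrightarrow> (\<lambda>i. x i + y i) \<in> Midset m a"
  unfolding Midset_def by auto
lemma Midset_diff: "x \<in> Midset m a \<Longrightarrow> y \<in> Midset m a \<Longrightarrow> (\<lambda>i. x i - y i) \<in> Midset m a"
  unfolding Midset_def by auto
lemma Midset_smult: "x \<in> Midset m a \<Longrightarrow> (\<lambda>i. c * x i) \<in> Midset m a"
  unfolding Midset_def by auto
lemma Midset_zero: "(\<lambda>i. 0) \<in> Midset m a"
  unfolding Midset_def by auto

lemma prj_Midset: "prj m a x \<in> Midset m a"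
  unfolding Midset_def prj_def by auto

lemma prj_id: "x \<in> Midset m a \<Longrightarrow> prj m a x = x"
  unfolding Midset_def prj_def by (auto simp: fun_eq_iff)

lemma prj_add: "prj m a (\<lambda>i. x i + y i) = (\<lambda>i. prj m a x i + prj m a y i)"
  unfolding prj_def by auto
lemma prj_diff: "prj m a (\<lambda>i. x i - y i) = (\<lambda>i. prj m a x i - prj m a y i)"
  unfolding prj_def by auto
lemma prj_smult: "prj m a (\<lambda>i. c * x i) = (\<lambda>i. c * prj m a x i)"
  unfolding prj_def by auto

text \<open>Bilinear form only sees the window [a, 2m-a) for vectors supported below 2m-a.\<close>
lemma Bf_prj:
  assumes "a \<le> m" "\<And>i. 2*m - a \<le> i \<Longrightarrow> u i = 0" "\<And>i. 2*m - a \<le> i \<Longrightarrow> v i = 0"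
  shows "Bf m u v = Bf m (prj m a u) (prj m a v)"
  unfolding Bf_def
proof (rule sum.cong[OF refl])
  fix i assume i: "i \<in> {..<m}"
  show "u i * v (2 * m - 1 - i) + v i * u (2 * m - 1 - i) =
        prj m a u i * prj m a v (2 * m - 1 - i) + prj m a v i * prj m a u (2 * m - 1 - i)"
  proof (cases "i < a")
    case True
    then have "2*m - a \<le> 2*m-1-i" using i assms(1) by auto
    then show ?thesis using assms True by (simp add: prj_def)
  next
    case False
    then show ?thesis using i assms(1) by (auto simp: prj_def)
  qed
qed

lemma Qf_prj:
  assumes "a \<le> m" "\<And>i. 2*m - a \<le> i \<Longrightarrow> u i = 0"
  shows "Qf m u = Qf m (prj m a u)"
  unfolding Qf_def
proof (rule sum.cong[OF refl])
  fix i assume i: "i \<in> {..<m}"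
  show "u i * u (2 * m - 1 - i) = prj m a u i * prj m a u (2 * m - 1 - i)"
  proof (cases "i < a")
    case True
    then have "2*m - a \<le> 2*m-1-i" using i assms(1) by auto
    then show ?thesis using assms True by (simp add: prj_def)
  next
    case False
    then show ?thesis using i assms(1) by (auto simp: prj_def)
  qed
qed

lemma Qf_diff: "Qf m (\<lambda>i. x i - y i) = Qf m x + Qf m y - Bf m x y"
proof -
  have e1: "(\<lambda>i. x i - y i) = (\<lambda>i. x i + (-1) * y i)" by simp
  have "Qf m (\<lambda>i. x i + (-1) * y i) = Qf m x + Qf m (\<lambda>i. (-1) * y i) + Bf m x (\<lambda>i. (-1) * y i)"
    by (rule Qf_add)
  also have "\<dots> = Qf m x + Qf m y - Bf m x y" by (simp only: Qf_smult Bf_smult_right) simp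
  finally show ?thesis by (simp only: e1)
qed

lemma finite_Mid0:
  assumes "finite (UNIV :: 'k::field set)"
  shows "finite (Midset m a :: (nat \<Rightarrow> 'k) set)"
proof -
  have "Midset m a \<subseteq> (\<lambda>f i. if i < 2*m then f i else 0) ` (PiE {..<2*m} (\<lambda>_. (UNIV::'k set)))"
  proof
    fix x :: "nat \<Rightarrow> 'k" assume x: "x \<in> Midset m a"
    have "x = (\<lambda>i. if i < 2*m then restrict x {..<2*m} i else 0)"
      using x unfolding Midset_def by (auto simp: fun_eq_iff restrict_def)
    moreover have "restrict x {..<2*m} \<in> PiE {..<2*m} (\<lambda>_. UNIV)" by auto
    ultimately show "x \<in> (\<lambda>f i. if i < 2*m then f i else 0) ` (PiE {..<2*m} (\<lambda>_. (UNIV::'k set)))"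
      by blast
  qed
  moreover have "finite (PiE {..<2*m} (\<lambda>_. (UNIV::'k set)))"
    using assms by (intro finite_PiE) auto
  ultimately show ?thesis using finite_subset by blast
qed

locale core =
  fixes U :: "nat \<Rightarrow> nat \<Rightarrow> 'k::field" and m :: nat
  assumes fin: "finite (UNIV :: 'k set)"
  and ut: "\<And>i j. j < i \<Longrightarrow> U i j = 0"
  and orth: "\<And>x. x \<in> Midset m 0 \<Longrightarrow> Qf m (mv m U x) = Qf m x"
begin

definition Kset :: "nat \<Rightarrow> (nat \<Rightarrow> 'k) set" where
  "Kset a = {x \<in> Midset m a. prj m a (mv m U x) = x}"

definition Imset :: "nat \<Rightarrow> (nat \<Rightarrow> 'k) set" where
  "Imset a = {w. \<exists>z \<in> Midset m a. w = (\<lambda>i. prj m a (mv m U z) i - z i)}"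

definition col :: "nat \<Rightarrow> nat \<Rightarrow> 'k" where
  "col j = (\<lambda>i. U i j)"

lemma mv_supp: "x \<in> Midset m a \<Longrightarrow> 2*m - a \<le> i \<Longrightarrow> mv m U x i = 0"
  unfolding mv_def
proof (intro sum.neutral ballI)
  fix j assume x: "x \<in> Midset m a" and i: "2*m - a \<le> i" and j: "j \<in> {..<2*m}"
  show "U i j * x j = 0"
  proof (cases "x j = 0")
    case False
    have "2*m - a \<le> j \<Longrightarrow> x j = 0" using x unfolding Midset_def by blast
    then have "j < 2*m - a" using False by (meson not_le)
    then show ?thesis using i ut by simp
  qed simp
qed

lemma mv_Mid0: "mv m U x \<in> Midset m 0"
  unfolding Midset_def mv_def by (auto intro!: sum.neutral simp: ut)

lemma col_supp: "j < i \<Longrightarrow> col j i = 0"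
  unfolding col_def by (simp add: ut)

lemma orthB: "x \<in> Midset m 0 \<Longrightarrow> y \<in> Midset m 0 \<Longrightarrow> Bf m (mv m U x) (mv m U y) = Bf m x y"
proof -
  assume x: "x \<in> Midset m 0" and y: "y \<in> Midset m 0"
  have "Qf m (mv m U (\<lambda>i. x i + y i)) = Qf m (\<lambda>i. x i + y i)"
    using Midset_add[OF x y] by (rule orth)
  then show ?thesis using orth[OF x] orth[OF y] by (simp add: mv_add Qf_add)
qed

lemma Kset_sub: "Kset a \<subseteq> Midset m a" unfolding Kset_def by auto

lemma Kset_add: "x \<in> Kset a \<Longrightarrow> y \<in> Kset a \<Longrightarrow> (\<lambda>i. x i + y i) \<in> Kset a"
  unfolding Kset_def by (auto simp: mv_add prj_add Midset_add)
lemma Kset_diff: "x \<in> Kset a \<Longrightarrow> y \<in> Kset a \<Longrightarrow> (\<lambda>i. x i - y i) \<in> Kset a"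
  unfolding Kset_def by (auto simp: mv_diff prj_diff Midset_diff)
lemma Kset_smult: "x \<in> Kset a \<Longrightarrow> (\<lambda>i. c * x i) \<in> Kset a"
  unfolding Kset_def by (auto simp: mv_smult prj_smult Midset_smult)

end


lemma Bf_zero_left[simp]: "Bf m (\<lambda>i. 0) y = 0" unfolding Bf_def by simp
lemma Bf_zero_right[simp]: "Bf m y (\<lambda>i. 0) = 0" unfolding Bf_def by simp
lemma Qf_zero[simp]: "Qf m (\<lambda>i. 0) = 0" unfolding Qf_def by simp

locale step = core U m for U :: "nat \<Rightarrow> nat \<Rightarrow> 'k::field" and m +
  fixes a :: nat
  assumes a_lt: "a < m"
begin

definition "Bi = 2*m - 1 - a"

lemma Bi_facts: "a < Bi" "m \<le> Bi" "Bi < 2*m" "Suc a \<le> m"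
  using a_lt by (auto simp: Bi_def)

lemma Bi_sum: "Bi + a + 1 = 2*m"
  using a_lt by (auto simp: Bi_def)

lemma Bi_eq[simp]: "2*m - 1 - a = Bi" "2*m - Suc a = Bi" "2*m - a = Suc Bi"
  using a_lt by (auto simp: Bi_def)

definition bld :: "'k \<Rightarrow> (nat \<Rightarrow> 'k) \<Rightarrow> 'k \<Rightarrow> nat \<Rightarrow> 'k" where
  "bld \<alpha> y \<beta> = (\<lambda>i. \<alpha> * ev a i + y i + \<beta> * ev Bi i)"

definition "tt = U a a"
definition "tt' = U Bi Bi"
definition "ss = U a Bi"
definition "cc = prj m (Suc a) (col Bi)"
definition "rr y = mv m U y a"
definition "Um y = prj m (Suc a) (mv m U y)"

lemma Mid_Suc_ends: "y \<in> Midset m (Suc a) \<Longrightarrow> y a = 0 \<and> y Bi = 0"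
  using Bi_facts Bi_sum unfolding Midset_def by auto

lemma bld_Mid: "y \<in> Midset m (Suc a) \<Longrightarrow> bld \<alpha> y \<beta> \<in> Midset m a"
  using Bi_facts Bi_sum unfolding Midset_def bld_def ev_def by auto

lemma bld_a: "y \<in> Midset m (Suc a) \<Longrightarrow> bld \<alpha> y \<beta> a = \<alpha>"
  using Bi_facts Bi_sum Mid_Suc_ends unfolding bld_def ev_def by auto

lemma bld_Bi: "y \<in> Midset m (Suc a) \<Longrightarrow> bld \<alpha> y \<beta> Bi = \<beta>"
  using Bi_facts Bi_sum Mid_Suc_ends unfolding bld_def ev_def by auto

lemma bld_prj: "y \<in> Midset m (Suc a) \<Longrightarrow> prj m (Suc a) (bld \<alpha> y \<beta>) = y"
  using Bi_facts Bi_sum unfolding bld_def ev_def prj_def Midset_def by (auto simp: fun_eq_iff)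

lemma decomp: "x \<in> Midset m a \<Longrightarrow> x = bld (x a) (prj m (Suc a) x) (x Bi)"
  using Bi_facts Bi_sum unfolding bld_def ev_def prj_def Midset_def by (auto simp: fun_eq_iff)

lemma bld_inj:
  assumes "y \<in> Midset m (Suc a)" "y' \<in> Midset m (Suc a)"
  shows "bld \<alpha> y \<beta> = bld \<alpha>' y' \<beta>' \<longleftrightarrow> \<alpha> = \<alpha>' \<and> y = y' \<and> \<beta> = \<beta>'"
  by (metis assms bld_Bi bld_a bld_prj)

lemma Bf_win:
  assumes "\<And>i. 2*m - a \<le> i \<Longrightarrow> u i = 0" "\<And>i. 2*m - a \<le> i \<Longrightarrow> v i = 0"
  shows "Bf m u v = u a * v Bi + u Bi * v a + Bf m (prj m (Suc a) u) (prj m (Suc a) v)"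
proof -
  let ?f = "\<lambda>i. u i * v (2*m-1-i) + v i * u (2*m-1-i)"
  let ?g = "\<lambda>i. prj m (Suc a) u i * prj m (Suc a) v (2*m-1-i) + prj m (Suc a) v i * prj m (Suc a) u (2*m-1-i)"
  have fg: "?f i = ?g i + (if i = a then u a * v Bi + u Bi * v a else 0)" if i: "i < m" for i
  proof -
    consider "i < a" | "i = a" | "a < i" by linarith
    then show ?thesis
    proof cases
      case 1
      then have h: "Suc Bi \<le> 2*m-1-i" using i Bi_sum by linarith
      then show ?thesis using 1 assms by (simp add: prj_def)
    next
      case 2
      then have e: "2*m-1-i = Bi" by simp
      show ?thesis unfolding e using 2 by (simp add: prj_def mult.commute)
    next
      case 3
      then show ?thesis using i a_lt Bi_sum by (auto simp: prj_def)
    qed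
  qed
  have "Bf m u v = (\<Sum>i<m. ?f i)" unfolding Bf_def by simp
  also have "\<dots> = (\<Sum>i<m. ?g i + (if i = a then u a * v Bi + u Bi * v a else 0))"
    by (rule sum.cong[OF refl], rule fg, simp)
  also have "\<dots> = (\<Sum>i<m. ?g i) + (u a * v Bi + u Bi * v a)"
    using a_lt by (simp add: sum.distrib)
  also have "\<dots> = Bf m (prj m (Suc a) u) (prj m (Suc a) v) + (u a * v Bi + u Bi * v a)"
    by (simp only: Bf_def)
  finally show ?thesis by (simp add: add.commute)
qed

lemma Qf_win:
  assumes "\<And>i. 2*m - a \<le> i \<Longrightarrow> u i = 0"
  shows "Qf m u = u a * u Bi + Qf m (prj m (Suc a) u)"
proof -
  let ?f = "\<lambda>i. u i * u (2*m-1-i)"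
  let ?g = "\<lambda>i. prj m (Suc a) u i * prj m (Suc a) u (2*m-1-i)"
  have fg: "?f i = ?g i + (if i = a then u a * u Bi else 0)" if i: "i < m" for i
  proof -
    consider "i < a" | "i = a" | "a < i" by linarith
    then show ?thesis
    proof cases
      case 1
      then have h: "Suc Bi \<le> 2*m-1-i" using i Bi_sum by linarith
      then show ?thesis using 1 assms by (simp add: prj_def)
    next
      case 2
      then have e: "2*m-1-i = Bi" by simp
      show ?thesis unfolding e using 2 by (simp add: prj_def mult.commute)
    next
      case 3
      then show ?thesis using i a_lt Bi_sum by (auto simp: prj_def)
    qed
  qed
  have "Qf m u = (\<Sum>i<m. ?f i)" unfolding Qf_def by simp
  also have "\<dots> = (\<Sum>i<m. ?g i + (if i = a then u a * u Bi else 0))"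
    by (rule sum.cong[OF refl], rule fg, simp)
  also have "\<dots> = (\<Sum>i<m. ?g i) + u a * u Bi"
    using a_lt by (simp add: sum.distrib)
  also have "\<dots> = Qf m (prj m (Suc a) u) + u a * u Bi"
    by (simp only: Qf_def)
  finally show ?thesis by (simp add: add.commute)
qed

lemma Bf_bld:
  assumes "y \<in> Midset m (Suc a)" "y' \<in> Midset m (Suc a)"
  shows "Bf m (bld \<alpha> y \<beta>) (bld \<alpha>' y' \<beta>') = \<alpha> * \<beta>' + \<beta> * \<alpha>' + Bf m y y'"
proof -
  have s: "\<And>i \<alpha> y \<beta>. y \<in> Midset m (Suc a) \<Longrightarrow> 2*m - a \<le> i \<Longrightarrow> bld \<alpha> y \<beta> i = 0"
    using bld_Mid unfolding Midset_def by blast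
  show ?thesis
    using Bf_win[of "bld \<alpha> y \<beta>" "bld \<alpha>' y' \<beta>'"] s assms
    by (simp add: bld_a bld_Bi bld_prj)
qed

lemma Qf_bld:
  assumes "y \<in> Midset m (Suc a)"
  shows "Qf m (bld \<alpha> y \<beta>) = \<alpha> * \<beta> + Qf m y"
proof -
  have s: "\<And>i \<alpha> y \<beta>. y \<in> Midset m (Suc a) \<Longrightarrow> 2*m - a \<le> i \<Longrightarrow> bld \<alpha> y \<beta> i = 0"
    using bld_Mid unfolding Midset_def by blast
  show ?thesis
    using Qf_win[of "bld \<alpha> y \<beta>"] s assms
    by (simp add: bld_a bld_Bi bld_prj)
qed

lemma Um_Mid: "Um y \<in> Midset m (Suc a)" unfolding Um_def by (rule prj_Midset)
lemma cc_Mid: "cc \<in> Midset m (Suc a)" unfolding cc_def by (rule prj_Midset)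

lemma Um_add: "Um (\<lambda>i. x i + y i) = (\<lambda>i. Um x i + Um y i)"
  unfolding Um_def by (simp add: mv_add prj_add)
lemma Um_diff: "Um (\<lambda>i. x i - y i) = (\<lambda>i. Um x i - Um y i)"
  unfolding Um_def by (simp add: mv_diff prj_diff)
lemma Um_smult: "Um (\<lambda>i. c * x i) = (\<lambda>i. c * Um x i)"
  unfolding Um_def by (simp add: mv_smult prj_smult)
lemma rr_add: "rr (\<lambda>i. x i + y i) = rr x + rr y"
  unfolding rr_def by (simp add: mv_add)
lemma rr_diff: "rr (\<lambda>i. x i - y i) = rr x - rr y"
  unfolding rr_def by (simp add: mv_diff)
lemma rr_smult: "rr (\<lambda>i. c * x i) = c * rr x"
  unfolding rr_def by (simp add: mv_smult)

lemma mv_bld: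
  assumes y: "y \<in> Midset m (Suc a)"
  shows "prj m a (mv m U (bld \<alpha> y \<beta>)) = bld (\<alpha> * tt + rr y + \<beta> * ss) (\<lambda>i. Um y i + \<beta> * cc i) (\<beta> * tt')"
proof -
  have e: "mv m U (bld \<alpha> y \<beta>) = (\<lambda>i. \<alpha> * col a i + mv m U y i + \<beta> * col Bi i)"
    using Bi_facts Bi_sum unfolding bld_def by (simp add: mv_add mv_smult mv_ev col_def)
  have yB: "mv m U y Bi = 0" using mv_supp[OF y] Bi_facts by simp
  show ?thesis
    unfolding e
  proof (rule ext)
    fix i
    consider "i < a" | "i = a" | "a < i \<and> i < Bi" | "i = Bi" | "Bi < i" by linarith
    then show "prj m a (\<lambda>i. \<alpha> * col a i + mv m U y i + \<beta> * col Bi i) i =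
      bld (\<alpha> * tt + rr y + \<beta> * ss) (\<lambda>i. Um y i + \<beta> * cc i) (\<beta> * tt') i"
    proof cases
      case 1 then show ?thesis using Bi_facts Bi_sum
        by (auto simp: prj_def bld_def ev_def Um_def cc_def)
    next
      case 2 then show ?thesis using Bi_facts Bi_sum
        by (auto simp: prj_def bld_def ev_def Um_def cc_def tt_def rr_def ss_def col_def)
    next
      case 3 then show ?thesis using Bi_facts Bi_sum
        by (auto simp: prj_def bld_def ev_def Um_def cc_def col_supp)
    next
      case 4 then show ?thesis using Bi_facts Bi_sum yB ut[OF Bi_facts(1)]
        by (auto simp: prj_def bld_def ev_def Um_def cc_def col_supp tt'_def col_def)
    next
      case 5 then show ?thesis using Bi_facts Bi_sum
        by (auto simp: prj_def bld_def ev_def Um_def cc_def)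
    qed
  qed
qed

lemma ev_Mid0: "j < 2*m \<Longrightarrow> ev j \<in> Midset m 0"
  unfolding Midset_def ev_def by auto

lemma col_supp_a: "2*m - a \<le> i \<Longrightarrow> col a i = 0" "2*m - a \<le> i \<Longrightarrow> col Bi i = 0"
  using Bi_facts Bi_sum col_supp by auto

lemma F1: "tt * tt' = 1"
proof -
  have "Bf m (mv m U (ev a)) (mv m U (ev Bi)) = Bf m (ev a) (ev Bi)"
    using Bi_facts Bi_sum by (intro orthB ev_Mid0) auto
  moreover have "mv m U (ev a) = col a" "mv m U (ev Bi) = col Bi"
    using Bi_facts Bi_sum by (auto simp: fun_eq_iff mv_ev col_def)
  moreover have "Bf m (col a) (col Bi) = tt * tt'"
  proof -
    have z: "prj m (Suc a) (col a) = (\<lambda>i. 0)" by (auto simp: prj_def col_def ut)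
    have "Bf m (col a) (col Bi) = col a a * col Bi Bi + col a Bi * col Bi a +
       Bf m (prj m (Suc a) (col a)) (prj m (Suc a) (col Bi))"
      by (rule Bf_win) (use col_supp_a in auto)
    also have "\<dots> = tt * tt'" using z by (simp add: col_def tt_def tt'_def ut[OF Bi_facts(1)])
    finally show ?thesis .
  qed
  moreover have "Bf m (ev a) (ev Bi) = 1"
    using Bf_win[of "ev a" "ev Bi"] Bi_facts
    by (simp add: prj_def ev_def cong: if_cong)
  ultimately show ?thesis by simp
qed


lemma Mid_Suc_sub: "y \<in> Midset m (Suc a) \<Longrightarrow> y \<in> Midset m a"
  using Midset_mono[of a "Suc a" m] by auto

lemma Mid_Suc_0: "y \<in> Midset m (Suc a) \<Longrightarrow> y \<in> Midset m 0"
  using Midset_mono[of 0 "Suc a" m] by auto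

lemma prj_ev_Bi: "prj m (Suc a) (ev Bi) = (\<lambda>i. 0)"
  by (auto simp: prj_def ev_def)

lemma F2:
  assumes y: "y \<in> Midset m (Suc a)"
  shows "rr y * tt' + Bf m (Um y) cc = 0"
proof -
  have o: "Bf m (mv m U y) (mv m U (ev Bi)) = Bf m y (ev Bi)"
    using Bi_facts by (intro orthB ev_Mid0 Mid_Suc_0[OF y]) auto
  have c: "mv m U (ev Bi) = col Bi"
    using Bi_facts by (auto simp: fun_eq_iff mv_ev col_def)
  have "Bf m (mv m U y) (col Bi) = mv m U y a * col Bi Bi + mv m U y Bi * col Bi a +
       Bf m (prj m (Suc a) (mv m U y)) (prj m (Suc a) (col Bi))"
    by (rule Bf_win) (use col_supp_a mv_supp[OF Mid_Suc_sub[OF y]] in auto)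
  also have "\<dots> = rr y * tt' + Bf m (Um y) cc"
    using mv_supp[OF y, of Bi] by (simp add: rr_def tt'_def col_def Um_def cc_def)
  finally have l: "Bf m (mv m U y) (col Bi) = rr y * tt' + Bf m (Um y) cc" .
  have "Bf m y (ev Bi) = y a * ev Bi Bi + y Bi * ev Bi a + Bf m (prj m (Suc a) y) (prj m (Suc a) (ev Bi))"
    by (rule Bf_win) (use Mid_Suc_sub[OF y] Bi_facts in \<open>auto simp: Midset_def ev_def\<close>)
  also have "\<dots> = 0" using Mid_Suc_ends[OF y] by (simp add: prj_ev_Bi)
  finally show ?thesis using o c l by simp
qed

lemma F3: "ss * tt' + Qf m cc = 0"
proof -
  have o: "Qf m (mv m U (ev Bi)) = Qf m (ev Bi)"
    using Bi_facts by (intro orth ev_Mid0) auto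
  have c: "mv m U (ev Bi) = col Bi"
    using Bi_facts by (auto simp: fun_eq_iff mv_ev col_def)
  have "Qf m (col Bi) = col Bi a * col Bi Bi + Qf m (prj m (Suc a) (col Bi))"
    by (rule Qf_win) (use col_supp_a in auto)
  also have "\<dots> = ss * tt' + Qf m cc" by (simp add: col_def ss_def tt'_def cc_def)
  finally have l: "Qf m (col Bi) = ss * tt' + Qf m cc" .
  have "Qf m (ev Bi :: nat \<Rightarrow> 'k) = ev Bi a * ev Bi Bi + Qf m (prj m (Suc a) (ev Bi))"
    by (rule Qf_win) (use Bi_facts in \<open>auto simp: ev_def\<close>)
  also have "\<dots> = 0"
  proof -
    have h: "ev Bi a = (0::'k)" using Bi_facts by (simp add: ev_def)
    show ?thesis by (simp only: h mult_zero_left prj_ev_Bi Qf_zero add_0)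
  qed
  finally show ?thesis using o c l by simp
qed

lemma F4:
  assumes y: "y \<in> Midset m (Suc a)" and z: "z \<in> Midset m (Suc a)"
  shows "Bf m (Um y) (Um z) = Bf m y z"
proof -
  have "Bf m (mv m U y) (mv m U z) = Bf m y z"
    by (intro orthB Mid_Suc_0 y z)
  moreover have "Bf m (mv m U y) (mv m U z) = Bf m (Um y) (Um z)"
    unfolding Um_def by (rule Bf_prj) (use Bi_facts mv_supp[OF y] mv_supp[OF z] in auto)
  ultimately show ?thesis by simp
qed

lemma F4Q:
  assumes y: "y \<in> Midset m (Suc a)"
  shows "Qf m (Um y) = Qf m y"
proof -
  have "Qf m (mv m U y) = Qf m y"
    by (intro orth Mid_Suc_0 y)
  moreover have "Qf m (mv m U y) = Qf m (Um y)"
    unfolding Um_def by (rule Qf_prj) (use Bi_facts mv_supp[OF y] in auto)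
  ultimately show ?thesis by simp
qed

lemma tt'_nz: "tt' \<noteq> 0" using F1 by auto
lemma tt_nz: "tt \<noteq> 0" using F1 by auto

lemma Kset_bld:
  assumes y: "y \<in> Midset m (Suc a)"
  shows "bld \<alpha> y \<beta> \<in> Kset a \<longleftrightarrow>
    (\<alpha> * tt + rr y + \<beta> * ss = \<alpha> \<and> (\<lambda>i. Um y i + \<beta> * cc i) = y \<and> \<beta> * tt' = \<beta>)"
proof -
  have m: "(\<lambda>i. Um y i + \<beta> * cc i) \<in> Midset m (Suc a)"
    by (intro Midset_add Midset_smult Um_Mid cc_Mid)
  show ?thesis
    unfolding Kset_def using bld_Mid[OF y] mv_bld[OF y] bld_inj[OF m y] by auto
qed

lemma KSuc: "y \<in> Kset (Suc a) \<longleftrightarrow> y \<in> Midset m (Suc a) \<and> Um y = y"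
  unfolding Kset_def Um_def by auto

lemma rr_K:
  assumes y: "y \<in> Kset (Suc a)" and z: "z \<in> Midset m (Suc a)" and zc: "(\<lambda>i. Um z i - z i) = cc"
  shows "rr y = 0"
proof -
  have ym: "y \<in> Midset m (Suc a)" and uy: "Um y = y" using y KSuc by auto
  have "Bf m y cc = Bf m y (Um z) - Bf m y z" using zc Bf_diff_right[of m y "Um z" z] by simp
  also have "Bf m y z = Bf m y (Um z)" using F4[OF ym z] uy by simp
  finally have "Bf m y cc = 0" by simp
  then have "rr y * tt' = 0" using F2[OF ym] uy by simp
  then show ?thesis using tt'_nz by simp
qed

lemma ss_rz:
  assumes z: "z \<in> Midset m (Suc a)" and zc: "(\<lambda>i. Um z i - z i) = cc"
  shows "ss = rr z"
proof -
  have c_eq: "cc = (\<lambda>i. Um z i - z i)" using zc by (rule sym)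
  have q1: "Qf m cc = 2 * Qf m z - Bf m (Um z) z"
    unfolding c_eq Qf_diff F4Q[OF z] by (simp only: mult_2)
  have q2: "Bf m (Um z) cc = 2 * Qf m z - Bf m (Um z) z"
    unfolding c_eq Bf_diff_right Bf_self F4Q[OF z] by (rule refl)
  have h1: "ss * tt' = - Qf m cc" using F3 by (simp add: eq_neg_iff_add_eq_0)
  have h2: "rr z * tt' = - Bf m (Um z) cc" using F2[OF z] by (simp add: eq_neg_iff_add_eq_0)
  have "ss * tt' = rr z * tt'" unfolding h1 h2 q1 q2 by (rule refl)
  then show ?thesis using tt'_nz by simp
qed

definition "Sset = {(y, d). y \<in> Midset m (Suc a) \<and> (\<lambda>i. Um y i + d * cc i) = y \<and> rr y + d * ss = 0}"


lemma finite_K: "finite (Kset b)"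
  by (rule finite_subset[OF Kset_sub finite_Mid0[OF fin]])

lemma S_yes:
  assumes z: "z \<in> Midset m (Suc a)" and zc: "(\<lambda>i. Um z i - z i) = cc"
  shows "card Sset = card (UNIV::'k set) * card (Kset (Suc a))"
proof -
  have bij: "bij_betw (\<lambda>(d, y0). ((\<lambda>i. y0 i - d * z i), d)) ((UNIV::'k set) \<times> Kset (Suc a)) Sset"
  proof (rule bij_betw_byWitness[where f' = "\<lambda>(y, d). (d, (\<lambda>i. y i + d * z i))"])
    show "\<forall>p\<in>UNIV \<times> Kset (Suc a). (\<lambda>(y, d). (d, \<lambda>i. y i + d * z i)) ((\<lambda>(d, y0). (\<lambda>i. y0 i - d * z i, d)) p) = p"
      by auto
    show "\<forall>p\<in>Sset. (\<lambda>(d, y0). (\<lambda>i. y0 i - d * z i, d)) ((\<lambda>(y, d). (d, \<lambda>i. y i + d * z i)) p) = p"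
      by auto
    show "(\<lambda>(d, y0). (\<lambda>i. y0 i - d * z i, d)) ` (UNIV \<times> Kset (Suc a)) \<subseteq> Sset"
    proof (rule image_subsetI)
      fix p :: "'k \<times> (nat \<Rightarrow> 'k)" assume p: "p \<in> UNIV \<times> Kset (Suc a)"
      obtain d y0 where pd: "p = (d, y0)" by (cases p)
      have y0: "y0 \<in> Kset (Suc a)" using p pd by auto
      have ym: "y0 \<in> Midset m (Suc a)" and uy: "Um y0 = y0" using y0 KSuc by auto
      have r0: "rr y0 = 0" by (rule rr_K[OF y0 z zc])
      have mm: "(\<lambda>i. y0 i - d * z i) \<in> Midset m (Suc a)" by (intro Midset_diff Midset_smult ym z)
      have u: "Um (\<lambda>i. y0 i - d * z i) = (\<lambda>i. y0 i - d * Um z i)"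
        using uy by (simp add: Um_diff Um_smult)
      have e1: "(\<lambda>i. Um (\<lambda>i. y0 i - d * z i) i + d * cc i) = (\<lambda>i. y0 i - d * z i)"
        unfolding zc[symmetric] u by (simp add: algebra_simps)
      have e2: "rr (\<lambda>i. y0 i - d * z i) + d * ss = 0"
        using r0 ss_rz[OF z zc] by (simp add: rr_diff rr_smult)
      show "(\<lambda>(d, y0). (\<lambda>i. y0 i - d * z i, d)) p \<in> Sset" unfolding Sset_def pd using mm e1 e2 by simp
    qed
    show "(\<lambda>(y, d). (d, \<lambda>i. y i + d * z i)) ` Sset \<subseteq> UNIV \<times> Kset (Suc a)"
    proof (rule image_subsetI)
      fix p assume p: "p \<in> Sset"
      obtain y d where pd: "p = (y, d)" by (cases p)
      from p have ym: "y \<in> Midset m (Suc a)" and e: "(\<lambda>i. Um y i + d * cc i) = y"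
        unfolding Sset_def pd by auto
      have mm: "(\<lambda>i. y i + d * z i) \<in> Midset m (Suc a)" by (intro Midset_add Midset_smult ym z)
      have e': "\<And>i. Um y i = y i - d * (Um z i - z i)"
        using e unfolding zc[symmetric] by (simp add: fun_eq_iff algebra_simps)
      have "Um (\<lambda>i. y i + d * z i) = (\<lambda>i. Um y i + d * Um z i)"
        by (simp add: Um_add Um_smult)
      also have "\<dots> = (\<lambda>i. y i + d * z i)"
        by (simp only: e') (simp add: algebra_simps)
      finally have "Um (\<lambda>i. y i + d * z i) = (\<lambda>i. y i + d * z i)" .
      then show "(\<lambda>(y, d). (d, \<lambda>i. y i + d * z i)) p \<in> UNIV \<times> Kset (Suc a)" unfolding pd using KSuc mm by auto
    qed
  qed
  then have "card Sset = card ((UNIV::'k set) \<times> Kset (Suc a))" by (simp add: bij_betw_same_card)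
  also have "\<dots> = card (UNIV::'k set) * card (Kset (Suc a))" by (simp add: card_cartesian_product)
  finally show ?thesis .
qed


lemma Imset_Suc: "w \<in> Imset (Suc a) \<longleftrightarrow> (\<exists>y \<in> Midset m (Suc a). w = (\<lambda>i. Um y i - y i))"
  unfolding Imset_def Um_def by auto

lemma Um_zero: "Um (\<lambda>i. 0) = (\<lambda>i. 0)"
  using Um_smult[of 0 "\<lambda>i. 0"] by simp

lemma rr_zero: "rr (\<lambda>i. 0) = 0"
  using rr_smult[of 0 "\<lambda>i. 0"] by simp

lemma exists_y1:
  assumes IH2: "\<forall>c' \<in> Midset m (Suc a). (\<forall>y \<in> Kset (Suc a). Bf m y c' = 0) \<longrightarrow> c' \<in> Imset (Suc a)"
  and nz: "\<not>(\<exists>z \<in> Midset m (Suc a). (\<lambda>i. Um z i - z i) = cc)"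
  obtains y1 where "y1 \<in> Kset (Suc a)" "rr y1 \<noteq> 0" "Bf m y1 cc = - (rr y1 * tt')"
proof -
  have "cc \<notin> Imset (Suc a)" using nz unfolding Imset_Suc by auto
  then obtain y1 where y1: "y1 \<in> Kset (Suc a)" and b1: "Bf m y1 cc \<noteq> 0"
    using IH2 cc_Mid by blast
  have y1m: "y1 \<in> Midset m (Suc a)" and uy1: "Um y1 = y1" using y1 KSuc by auto
  have f: "rr y1 * tt' + Bf m y1 cc = 0" using F2[OF y1m] uy1 by simp
  then have "Bf m y1 cc = - (rr y1 * tt')" by (simp add: eq_neg_iff_add_eq_0 add.commute)
  moreover have "rr y1 \<noteq> 0" using f b1 by auto
  ultimately show ?thesis using that y1 by blast
qed

lemma S_no:
  assumes IH2: "\<forall>c' \<in> Midset m (Suc a). (\<forall>y \<in> Kset (Suc a). Bf m y c' = 0) \<longrightarrow> c' \<in> Imset (Suc a)"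
  and nz: "\<not>(\<exists>z \<in> Midset m (Suc a). (\<lambda>i. Um z i - z i) = cc)"
  shows "card (UNIV::'k set) * card Sset = card (Kset (Suc a))"
proof -
  obtain y1 where y1: "y1 \<in> Kset (Suc a)" and r1: "rr y1 \<noteq> 0"
    using exists_y1[OF IH2 nz] by blast
  define K0 where "K0 = {y \<in> Kset (Suc a). rr y = 0}"
  have S_eq: "Sset = (\<lambda>y. (y, 0)) ` K0"
  proof
    show "Sset \<subseteq> (\<lambda>y. (y, 0)) ` K0"
    proof
      fix p assume p: "p \<in> Sset"
      obtain y d where pd: "p = (y, d)" by (cases p)
      have ym: "y \<in> Midset m (Suc a)" and e: "(\<lambda>i. Um y i + d * cc i) = y" and r: "rr y + d * ss = 0"
        using p unfolding Sset_def pd by auto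
      have d0: "d = 0"
      proof (rule ccontr)
        assume dn: "d \<noteq> 0"
        let ?z = "\<lambda>i. (- 1 / d) * y i"
        have zm: "?z \<in> Midset m (Suc a)" by (intro Midset_smult ym)
        have "(\<lambda>i. Um ?z i - ?z i) = cc"
        proof
          fix i
          have h: "Um y i + d * cc i = y i" using e by (metis (no_types) fun_cong)
          have u: "Um ?z i = (- 1 / d) * Um y i" by (simp only: Um_smult)
          show "Um ?z i - ?z i = cc i" unfolding u using dn h by (simp add: field_simps)
        qed
        then show False using nz zm by blast
      qed
      then have "Um y = y" using e by simp
      then have "y \<in> Kset (Suc a)" using KSuc ym by auto
      moreover have "rr y = 0" using r d0 by simp
      ultimately show "p \<in> (\<lambda>y. (y, 0)) ` K0" unfolding K0_def pd d0 by auto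
    qed
    show "(\<lambda>y. (y, 0)) ` K0 \<subseteq> Sset" unfolding K0_def Sset_def using KSuc by auto
  qed
  have c1: "card Sset = card K0" unfolding S_eq by (rule card_image) (auto simp: inj_on_def)
  have bij: "bij_betw (\<lambda>(l, y). (\<lambda>i. y i + l * y1 i)) ((UNIV::'k set) \<times> K0) (Kset (Suc a))"
  proof (rule bij_betw_byWitness[where f' = "\<lambda>y. (rr y / rr y1, (\<lambda>i. y i - (rr y / rr y1) * y1 i))"])
    show "\<forall>p\<in>(UNIV::'k set) \<times> K0. (\<lambda>y. (rr y / rr y1, \<lambda>i. y i - rr y / rr y1 * y1 i))
            ((\<lambda>(l, y). \<lambda>i. y i + l * y1 i) p) = p"
    proof
      fix p :: "'k \<times> (nat \<Rightarrow> 'k)" assume p: "p \<in> UNIV \<times> K0"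
      obtain l y where pd: "p = (l, y)" by (cases p)
      have ry: "rr y = 0" using p pd unfolding K0_def by auto
      have "rr (\<lambda>i. y i + l * y1 i) = l * rr y1" using ry by (simp only: rr_add rr_smult) simp
      then show "(\<lambda>y. (rr y / rr y1, \<lambda>i. y i - rr y / rr y1 * y1 i)) ((\<lambda>(l, y). \<lambda>i. y i + l * y1 i) p) = p"
        unfolding pd using r1 by simp
    qed
    show "\<forall>y\<in>Kset (Suc a). (\<lambda>(l, y). \<lambda>i. y i + l * y1 i) (rr y / rr y1, \<lambda>i. y i - rr y / rr y1 * y1 i) = y"
      by simp
    show "(\<lambda>(l, y). \<lambda>i. y i + l * y1 i) ` ((UNIV::'k set) \<times> K0) \<subseteq> Kset (Suc a)"
      unfolding K0_def using y1 by (auto intro!: Kset_add Kset_smult)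
    show "(\<lambda>y. (rr y / rr y1, \<lambda>i. y i - rr y / rr y1 * y1 i)) ` Kset (Suc a) \<subseteq> (UNIV::'k set) \<times> K0"
    proof (rule image_subsetI)
      fix y assume y: "y \<in> Kset (Suc a)"
      have "(\<lambda>i. y i - rr y / rr y1 * y1 i) \<in> Kset (Suc a)" using y y1 by (intro Kset_diff Kset_smult)
      moreover have "rr (\<lambda>i. y i - rr y / rr y1 * y1 i) = 0" using r1 by (simp only: rr_diff rr_smult) simp
      ultimately show "(rr y / rr y1, \<lambda>i. y i - rr y / rr y1 * y1 i) \<in> (UNIV::'k set) \<times> K0"
        unfolding K0_def by simp
    qed
  qed
  then have "card (Kset (Suc a)) = card ((UNIV::'k set) \<times> K0)" by (simp add: bij_betw_same_card)
  also have "\<dots> = card (UNIV::'k set) * card K0" by (simp add: card_cartesian_product)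
  finally show ?thesis using c1 by simp
qed


lemma tt'_ne1: "tt \<noteq> 1 \<Longrightarrow> tt' \<noteq> 1" using F1 by auto
lemma tt'_eq1: "tt = 1 \<Longrightarrow> tt' = 1" using F1 by auto

lemma lift_K:
  assumes y: "y \<in> Kset (Suc a)" and t: "tt \<noteq> 1"
  shows "bld (rr y / (1 - tt)) y 0 \<in> Kset a"
proof -
  have ym: "y \<in> Midset m (Suc a)" and uy: "Um y = y" using y KSuc by auto
  have "rr y / (1 - tt) * tt + rr y = rr y / (1 - tt)" using t by (simp add: field_simps)
  then show ?thesis using Kset_bld[OF ym] uy by simp
qed

lemma K_decomp:
  assumes x: "x \<in> Kset a"
  shows "x = bld (x a) (prj m (Suc a) x) (x Bi)"
    "x a * tt + rr (prj m (Suc a) x) + x Bi * ss = x a"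
    "(\<lambda>i. Um (prj m (Suc a) x) i + x Bi * cc i) = prj m (Suc a) x"
    "x Bi * tt' = x Bi"
proof -
  have xm: "x \<in> Midset m a" using x Kset_sub by auto
  show xd: "x = bld (x a) (prj m (Suc a) x) (x Bi)" by (rule decomp[OF xm])
  have "bld (x a) (prj m (Suc a) x) (x Bi) \<in> Kset a" using x xd by simp
  then show "x a * tt + rr (prj m (Suc a) x) + x Bi * ss = x a"
    "(\<lambda>i. Um (prj m (Suc a) x) i + x Bi * cc i) = prj m (Suc a) x"
    "x Bi * tt' = x Bi"
    using Kset_bld[OF prj_Midset] by auto
qed

lemma card_Ka_ne1:
  assumes t: "tt \<noteq> 1"
  shows "card (Kset a) = card (Kset (Suc a))"
proof -
  have t': "tt' \<noteq> 1" using tt'_ne1[OF t] .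
  have bij: "bij_betw (\<lambda>y. bld (rr y / (1 - tt)) y 0) (Kset (Suc a)) (Kset a)"
  proof (rule bij_betw_byWitness[where f' = "prj m (Suc a)"])
    show "\<forall>y\<in>Kset (Suc a). prj m (Suc a) (bld (rr y / (1 - tt)) y 0) = y"
      using KSuc bld_prj by auto
    show "(\<lambda>y. bld (rr y / (1 - tt)) y 0) ` Kset (Suc a) \<subseteq> Kset a"
      using lift_K[OF _ t] by auto
    have xB: "x Bi = 0" if x: "x \<in> Kset a" for x
    proof -
      have "x Bi * tt' = x Bi" by (rule K_decomp(4)[OF x])
      then have "x Bi * (tt' - 1) = 0" by (simp add: algebra_simps)
      then show ?thesis using t' by simp
    qed
    show "prj m (Suc a) ` Kset a \<subseteq> Kset (Suc a)"
    proof (rule image_subsetI)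
      fix x assume x: "x \<in> Kset a"
      have "Um (prj m (Suc a) x) = prj m (Suc a) x" using K_decomp(3)[OF x] xB[OF x] by simp
      then show "prj m (Suc a) x \<in> Kset (Suc a)" using KSuc prj_Midset by auto
    qed
    show "\<forall>x\<in>Kset a. bld (rr (prj m (Suc a) x) / (1 - tt)) (prj m (Suc a) x) 0 = x"
    proof
      fix x assume x: "x \<in> Kset a"
      have "x a * tt + rr (prj m (Suc a) x) = x a" using K_decomp(2)[OF x] xB[OF x] by simp
      then have "x a = rr (prj m (Suc a) x) / (1 - tt)" using t by (simp add: field_simps)
      then show "bld (rr (prj m (Suc a) x) / (1 - tt)) (prj m (Suc a) x) 0 = x"
        using K_decomp(1)[OF x] xB[OF x] by simp
    qed
  qed
  then show ?thesis by (simp add: bij_betw_same_card)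
qed

lemma card_Ka_eq1:
  assumes t: "tt = 1"
  shows "card (Kset a) = card (UNIV::'k set) * card Sset"
proof -
  have t': "tt' = 1" using tt'_eq1[OF t] .
  have bij: "bij_betw (\<lambda>(\<alpha>, (y, d)). bld \<alpha> y d) ((UNIV::'k set) \<times> Sset) (Kset a)"
  proof (rule bij_betw_byWitness[where f' = "\<lambda>x. (x a, (prj m (Suc a) x, x Bi))"])
    show "\<forall>p\<in>(UNIV::'k set) \<times> Sset. (\<lambda>x. (x a, prj m (Suc a) x, x Bi)) ((\<lambda>(\<alpha>, y, d). bld \<alpha> y d) p) = p"
    proof
      fix p :: "'k \<times> (nat \<Rightarrow> 'k) \<times> 'k" assume p: "p \<in> UNIV \<times> Sset"
      obtain al y d where pd: "p = (al, y, d)" by (cases p) auto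
      have ym: "y \<in> Midset m (Suc a)" using p pd unfolding Sset_def by auto
      show "(\<lambda>x. (x a, prj m (Suc a) x, x Bi)) ((\<lambda>(\<alpha>, y, d). bld \<alpha> y d) p) = p"
        unfolding pd using ym by (simp add: bld_a bld_Bi bld_prj)
    qed
    show "\<forall>x\<in>Kset a. (\<lambda>(\<alpha>, y, d). bld \<alpha> y d) (x a, prj m (Suc a) x, x Bi) = x"
      using K_decomp(1) by auto
    show "(\<lambda>(\<alpha>, y, d). bld \<alpha> y d) ` ((UNIV::'k set) \<times> Sset) \<subseteq> Kset a"
    proof (rule image_subsetI)
      fix p :: "'k \<times> (nat \<Rightarrow> 'k) \<times> 'k" assume p: "p \<in> UNIV \<times> Sset"
      obtain al y d where pd: "p = (al, y, d)" by (cases p) auto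
      have ym: "y \<in> Midset m (Suc a)" and e: "(\<lambda>i. Um y i + d * cc i) = y" and r: "rr y + d * ss = 0"
        using p pd unfolding Sset_def by auto
      have "al * tt + rr y + d * ss = al" using r t by (simp add: algebra_simps)
      then show "(\<lambda>(\<alpha>, y, d). bld \<alpha> y d) p \<in> Kset a"
        unfolding pd using Kset_bld[OF ym] e t' by simp
    qed
    show "(\<lambda>x. (x a, prj m (Suc a) x, x Bi)) ` Kset a \<subseteq> (UNIV::'k set) \<times> Sset"
    proof (rule image_subsetI)
      fix x assume x: "x \<in> Kset a"
      have "rr (prj m (Suc a) x) + x Bi * ss = 0" using K_decomp(2)[OF x] t by (simp add: algebra_simps)
      then show "(x a, prj m (Suc a) x, x Bi) \<in> (UNIV::'k set) \<times> Sset"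
        unfolding Sset_def using K_decomp(3)[OF x] prj_Midset by auto
    qed
  qed
  then have "card (Kset a) = card ((UNIV::'k set) \<times> Sset)" by (simp add: bij_betw_same_card)
  also have "\<dots> = card (UNIV::'k set) * card Sset" by (simp add: card_cartesian_product)
  finally show ?thesis .
qed

lemma step_card:
  assumes IH1: "\<exists>e. card (Kset (Suc a)) = card (UNIV::'k set) ^ (2*e)"
  and IH2: "\<forall>c' \<in> Midset m (Suc a). (\<forall>y \<in> Kset (Suc a). Bf m y c' = 0) \<longrightarrow> c' \<in> Imset (Suc a)"
  shows "\<exists>e. card (Kset a) = card (UNIV::'k set) ^ (2*e)"
proof -
  obtain e where e: "card (Kset (Suc a)) = card (UNIV::'k set) ^ (2*e)" using IH1 by blast
  show ?thesis
  proof (cases "tt = 1")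
    case False then show ?thesis using card_Ka_ne1 e by auto
  next
    case True
    show ?thesis
    proof (cases "\<exists>z \<in> Midset m (Suc a). (\<lambda>i. Um z i - z i) = cc")
      case yes: True
      then obtain z where "z \<in> Midset m (Suc a)" "(\<lambda>i. Um z i - z i) = cc" by blast
      then have "card (Kset a) = card (UNIV::'k set) ^ (2 * Suc e)"
        using card_Ka_eq1[OF True] S_yes e by (simp add: power_Suc)
      then show ?thesis by blast
    next
      case no: False
      have "card (Kset a) = card (Kset (Suc a))" using card_Ka_eq1[OF True] S_no[OF IH2 no] by simp
      then show ?thesis using e by auto
    qed
  qed
qed


lemma Um_uminus: "Um (\<lambda>i. - x i) = (\<lambda>i. - Um x i)"
  using Um_smult[of "-1" x] by simp
lemma rr_uminus: "rr (\<lambda>i. - x i) = - rr x"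
  using rr_smult[of "-1" x] by simp
lemma Bf_uminus_left: "Bf m (\<lambda>i. - x i) y = - Bf m x y"
  using Bf_smult_left[of m "-1" x y] by simp
lemma Midset_uminus: "x \<in> Midset m b \<Longrightarrow> (\<lambda>i. - x i) \<in> Midset m b"
  using Midset_smult[of x m b "-1"] by simp

lemma bld_diff: "(\<lambda>i. bld \<alpha> y \<beta> i - bld \<alpha>' y' \<beta>' i) = bld (\<alpha> - \<alpha>') (\<lambda>i. y i - y' i) (\<beta> - \<beta>')"
  by (auto simp: bld_def fun_eq_iff algebra_simps)

lemma Im_suff:
  assumes c: "c' \<in> Midset m a" and y: "y \<in> Midset m (Suc a)"
  and e1: "xA * tt + rr y + d * ss - xA = c' a"
  and e2: "(\<lambda>i. Um y i + d * cc i - y i) = prj m (Suc a) c'"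
  and e3: "d * tt' - d = c' Bi"
  shows "c' \<in> Imset a"
proof -
  let ?z = "bld xA y d"
  have zm: "?z \<in> Midset m a" by (rule bld_Mid[OF y])
  have "(\<lambda>i. prj m a (mv m U ?z) i - ?z i) =
      bld (xA * tt + rr y + d * ss - xA) (\<lambda>i. (Um y i + d * cc i) - y i) (d * tt' - d)"
    unfolding mv_bld[OF y] bld_diff by simp
  also have "\<dots> = c'" using e1 e2 e3 decomp[OF c] by simp
  finally have "c' = (\<lambda>i. prj m a (mv m U ?z) i - ?z i)" by simp
  then show ?thesis unfolding Imset_def using zm by blast
qed

lemma Bf_c:
  assumes c: "c' \<in> Midset m a" and y: "y \<in> Midset m (Suc a)"
  shows "Bf m (bld \<alpha> y \<beta>) c' = \<alpha> * c' Bi + \<beta> * c' a + Bf m y (prj m (Suc a) c')"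
proof -
  have "Bf m (bld \<alpha> y \<beta>) c' = Bf m (bld \<alpha> y \<beta>) (bld (c' a) (prj m (Suc a) c') (c' Bi))"
    using decomp[OF c] by simp
  also have "\<dots> = \<alpha> * c' Bi + \<beta> * c' a + Bf m y (prj m (Suc a) c')"
    by (rule Bf_bld[OF y prj_Midset])
  finally show ?thesis .
qed

lemma step_im:
  assumes IH2: "\<forall>c' \<in> Midset m (Suc a). (\<forall>y \<in> Kset (Suc a). Bf m y c' = 0) \<longrightarrow> c' \<in> Imset (Suc a)"
  shows "\<forall>c' \<in> Midset m a. (\<forall>y \<in> Kset a. Bf m y c' = 0) \<longrightarrow> c' \<in> Imset a"
proof (intro ballI impI)
  fix c' assume c: "c' \<in> Midset m a" and perp: "\<forall>y \<in> Kset a. Bf m y c' = 0"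
  define al where "al = c' a"
  define be where "be = c' Bi"
  define ga where "ga = prj m (Suc a) c'"
  have gam: "ga \<in> Midset m (Suc a)" unfolding ga_def by (rule prj_Midset)
  show "c' \<in> Imset a"
  proof (cases "tt = 1")
    case False
    have t': "tt' \<noteq> 1" using tt'_ne1[OF False] .
    have tm: "tt' * (1 - tt) = tt' - 1" using F1 by (simp add: algebra_simps)
    define d where "d = be / (tt' - 1)"
    have "(\<lambda>i. ga i - d * cc i) \<in> Imset (Suc a)"
    proof (rule IH2[THEN bspec, THEN mp])
      show "(\<lambda>i. ga i - d * cc i) \<in> Midset m (Suc a)" by (intro Midset_diff Midset_smult gam cc_Mid)
      show "\<forall>y\<in>Kset (Suc a). Bf m y (\<lambda>i. ga i - d * cc i) = 0"
      proof
        fix y assume y: "y \<in> Kset (Suc a)"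
        have ym: "y \<in> Midset m (Suc a)" and uy: "Um y = y" using y KSuc by auto
        have "Bf m (bld (rr y / (1 - tt)) y 0) c' = 0" using perp lift_K[OF y False] by blast
        then have h1: "rr y / (1 - tt) * be + Bf m y ga = 0"
          using Bf_c[OF c ym] by (simp add: be_def ga_def)
        have h2: "rr y * tt' + Bf m y cc = 0" using F2[OF ym] uy by simp
        have "Bf m y (\<lambda>i. ga i - d * cc i) = Bf m y ga - d * Bf m y cc"
          by (simp add: Bf_diff_right Bf_smult_right)
        also have "\<dots> = - (rr y / (1 - tt) * be) + d * (rr y * tt')"
        proof -
          have a1: "Bf m y ga = - (rr y / (1 - tt) * be)" using h1 by (metis add.commute eq_neg_iff_add_eq_0)
          have a2: "Bf m y cc = - (rr y * tt')" using h2 by (metis add.commute eq_neg_iff_add_eq_0)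
          show ?thesis by (simp only: a1 a2) simp
        qed
        also have "\<dots> = 0"
        proof -
          have n1: "1 - tt \<noteq> 0" using False by simp
          have n2: "tt' - 1 \<noteq> 0" using t' by simp
          have te: "tt' = 1 / tt" using F1 tt_nz by (simp add: field_simps)
          have n3: "1 - tt \<noteq> 0" using False by simp
          have "d * (rr y * tt') = rr y / (1 - tt) * be"
            unfolding d_def te using tt_nz n3 by (simp add: field_simps)
          then show ?thesis by simp
        qed
        finally show "Bf m y (\<lambda>i. ga i - d * cc i) = 0" .
      qed
    qed
    then obtain y0 where y0: "y0 \<in> Midset m (Suc a)" and g: "(\<lambda>i. ga i - d * cc i) = (\<lambda>i. Um y0 i - y0 i)"
      unfolding Imset_Suc by blast
    define xA where "xA = (al - rr y0 - d * ss) / (tt - 1)"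
    show ?thesis
    proof (rule Im_suff[OF c y0, of xA d])
      show "xA * tt + rr y0 + d * ss - xA = c' a"
      proof -
        have n: "tt - 1 \<noteq> 0" using False by simp
        have h: "xA * (tt - 1) = al - rr y0 - d * ss" unfolding xA_def using n by simp
        have "xA * tt + rr y0 + d * ss - xA = xA * (tt - 1) + rr y0 + d * ss" by (simp add: algebra_simps)
        also have "\<dots> = al" unfolding h by simp
        finally show ?thesis by (simp add: al_def)
      qed
      show "(\<lambda>i. Um y0 i + d * cc i - y0 i) = prj m (Suc a) c'"
      proof
        fix i
        have "ga i - d * cc i = Um y0 i - y0 i" using g by (metis (no_types) fun_cong)
        then show "Um y0 i + d * cc i - y0 i = prj m (Suc a) c' i" unfolding ga_def by (simp add: algebra_simps)
      qed
      show "d * tt' - d = c' Bi"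
      proof -
        have n: "tt' - 1 \<noteq> 0" using t' by simp
        have "d * tt' - d = d * (tt' - 1)" by (simp add: algebra_simps)
        also have "\<dots> = be" unfolding d_def using n by simp
        finally show ?thesis by (simp add: be_def)
      qed
    qed
  next
    case True
    have t': "tt' = 1" using tt'_eq1[OF True] .
    have "bld 1 (\<lambda>i. 0) 0 \<in> Kset a"
      using Kset_bld[OF Midset_zero] True by (simp add: rr_zero Um_zero)
    then have "Bf m (bld 1 (\<lambda>i. 0) 0) c' = 0" using perp by blast
    then have be0: "be = 0" using Bf_c[OF c Midset_zero] by (simp add: be_def)
    have perp0: "Bf m y ga = 0" if y: "y \<in> Kset (Suc a)" and r: "rr y = 0" for y
    proof -
      have ym: "y \<in> Midset m (Suc a)" and uy: "Um y = y" using y KSuc by auto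
      have "bld 0 y 0 \<in> Kset a" using Kset_bld[OF ym] uy r by simp
      then have "Bf m (bld 0 y 0) c' = 0" using perp by blast
      then show ?thesis using Bf_c[OF c ym] by (simp add: ga_def)
    qed
    show ?thesis
    proof (cases "\<exists>z \<in> Midset m (Suc a). (\<lambda>i. Um z i - z i) = cc")
      case yes: True
      then obtain z where z: "z \<in> Midset m (Suc a)" and zc: "(\<lambda>i. Um z i - z i) = cc" by blast
      have "ga \<in> Imset (Suc a)"
      proof (rule IH2[THEN bspec, THEN mp, OF gam])
        show "\<forall>y\<in>Kset (Suc a). Bf m y ga = 0" using perp0 rr_K[OF _ z zc] by blast
      qed
      then obtain y0 where y0: "y0 \<in> Midset m (Suc a)" and g: "ga = (\<lambda>i. Um y0 i - y0 i)"
        unfolding Imset_Suc by blast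
      have zn: "(\<lambda>i. - z i) \<in> Midset m (Suc a)" by (rule Midset_uminus[OF z])
      have "(\<lambda>i. Um (\<lambda>i. - z i) i + 1 * cc i) = (\<lambda>i. - z i)"
        unfolding Um_uminus zc[symmetric] by simp
      moreover have "0 * tt + rr (\<lambda>i. - z i) + 1 * ss = 0"
        using ss_rz[OF z zc] by (simp add: rr_uminus)
      ultimately have "bld 0 (\<lambda>i. - z i) 1 \<in> Kset a" using Kset_bld[OF zn] t' by simp
      then have "Bf m (bld 0 (\<lambda>i. - z i) 1) c' = 0" using perp by blast
      then have alz: "al = Bf m z ga"
        using Bf_c[OF c zn] by (simp add: al_def ga_def Bf_uminus_left)
      have A: "rr y0 + Bf m (Um y0) cc = 0" using F2[OF y0] t' by simp
      have B: "Bf m (Um y0) cc = Bf m y0 z - Bf m (Um y0) z"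
        unfolding zc[symmetric] Bf_diff_right F4[OF y0 z] by (rule refl)
      have C: "Bf m z ga = Bf m (Um y0) z - Bf m y0 z"
        unfolding g Bf_diff_right using Bf_sym by metis
      have "rr y0 = - Bf m (Um y0) cc" using A by (metis add.commute eq_neg_iff_add_eq_0)
      also have "\<dots> = Bf m z ga" unfolding B C by simp
      finally have ry0: "rr y0 = al" using alz by simp
      show ?thesis
      proof (rule Im_suff[OF c y0, of 0 0])
        show "0 * tt + rr y0 + 0 * ss - 0 = c' a" using ry0 by (simp add: al_def)
        show "(\<lambda>i. Um y0 i + 0 * cc i - y0 i) = prj m (Suc a) c'" using g by (simp add: ga_def)
        show "0 * tt' - 0 = c' Bi" using be0 by (simp add: be_def)
      qed
    next
      case no: False
      obtain y1 where y1: "y1 \<in> Kset (Suc a)" and r1: "rr y1 \<noteq> 0" and b1: "Bf m y1 cc = - (rr y1 * tt')"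
        using exists_y1[OF IH2 no] by blast
      have y1m: "y1 \<in> Midset m (Suc a)" and uy1: "Um y1 = y1" using y1 KSuc by auto
      define mu where "mu = Bf m y1 ga / rr y1"
      define d where "d = - mu"
      have "(\<lambda>i. ga i - d * cc i) \<in> Imset (Suc a)"
      proof (rule IH2[THEN bspec, THEN mp])
        show "(\<lambda>i. ga i - d * cc i) \<in> Midset m (Suc a)" by (intro Midset_diff Midset_smult gam cc_Mid)
        show "\<forall>y\<in>Kset (Suc a). Bf m y (\<lambda>i. ga i - d * cc i) = 0"
        proof
          fix y assume y: "y \<in> Kset (Suc a)"
          have ym: "y \<in> Midset m (Suc a)" and uy: "Um y = y" using y KSuc by auto
          let ?y' = "\<lambda>i. y i - rr y / rr y1 * y1 i"
          have y'K: "?y' \<in> Kset (Suc a)" using y y1 by (intro Kset_diff Kset_smult)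
          have "rr ?y' = 0" using r1 by (simp only: rr_diff rr_smult) simp
          then have "Bf m ?y' ga = 0" using perp0[OF y'K] by simp
          then have hy: "Bf m y ga = rr y / rr y1 * Bf m y1 ga"
            by (simp only: Bf_diff_left Bf_smult_left) simp
          have hc: "Bf m y cc = - rr y" using F2[OF ym] uy t' by (simp add: eq_neg_iff_add_eq_0 add.commute)
          have "Bf m y (\<lambda>i. ga i - d * cc i) = Bf m y ga - d * Bf m y cc"
            by (simp add: Bf_diff_right Bf_smult_right)
          also have "\<dots> = 0" unfolding hy hc d_def mu_def using r1 by (simp add: field_simps)
          finally show "Bf m y (\<lambda>i. ga i - d * cc i) = 0" .
        qed
      qed
      then obtain y0 where y0: "y0 \<in> Midset m (Suc a)" and g: "(\<lambda>i. ga i - d * cc i) = (\<lambda>i. Um y0 i - y0 i)"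
        unfolding Imset_Suc by blast
      define la where "la = (al - d * ss - rr y0) / rr y1"
      let ?y = "\<lambda>i. y0 i + la * y1 i"
      have ym: "?y \<in> Midset m (Suc a)" by (intro Midset_add Midset_smult y0 y1m)
      show ?thesis
      proof (rule Im_suff[OF c ym, of 0 d])
        have r: "rr ?y = rr y0 + la * rr y1" by (simp only: rr_add rr_smult)
        have l: "la * rr y1 = al - d * ss - rr y0" unfolding la_def using r1 by simp
        show "0 * tt + rr ?y + d * ss - 0 = c' a"
          unfolding r l al_def by simp
        have u: "Um ?y = (\<lambda>i. Um y0 i + la * y1 i)" using uy1 by (simp only: Um_add Um_smult)
        show "(\<lambda>i. Um ?y i + d * cc i - ?y i) = prj m (Suc a) c'"
        proof
          fix i
          have "ga i - d * cc i = Um y0 i - y0 i" using g by (metis (no_types) fun_cong)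
          then show "Um ?y i + d * cc i - ?y i = prj m (Suc a) c' i"
            unfolding u ga_def by (simp add: algebra_simps)
        qed
        show "d * tt' - d = c' Bi" using be0 t' by (simp add: be_def)
      qed
    qed
  qed
qed

end


definition pswap :: "nat \<Rightarrow> (nat \<Rightarrow> 'k) \<Rightarrow> nat \<Rightarrow> 'k" where
  "pswap m x = (\<lambda>i. if i = 0 then x (2*m-1) else if i = 2*m-1 then x 0 else x i)"

context core
begin

lemma mv_zero: "mv m U (\<lambda>i. 0) = (\<lambda>i. 0)"
  unfolding mv_def by simp

lemma q_ge2: "2 \<le> card (UNIV :: 'k set)"
proof -
  have "card {0::'k, 1} \<le> card (UNIV :: 'k set)" using fin by (intro card_mono) auto
  then show ?thesis by simp
qed

lemma base_levels:
  "(\<exists>e. card (Kset m) = card (UNIV::'k set) ^ (2*e)) \<and>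
   (\<forall>c' \<in> Midset m m. (\<forall>y \<in> Kset m. Bf m y c' = 0) \<longrightarrow> c' \<in> Imset m)"
proof -
  have M: "Midset m m = {(\<lambda>i. 0 :: 'k)}"
  proof
    show "Midset m m \<subseteq> {(\<lambda>i. 0 :: 'k)}"
    proof
      fix x :: "nat \<Rightarrow> 'k" assume x: "x \<in> Midset m m"
      have "x i = 0" for i using x unfolding Midset_def by (cases "i < m") auto
      then show "x \<in> {(\<lambda>i. 0 :: 'k)}" by auto
    qed
    show "{(\<lambda>i. 0 :: 'k)} \<subseteq> Midset m m" by (simp add: Midset_zero)
  qed
  have "Kset m = {(\<lambda>i. 0)}" unfolding Kset_def M by (auto simp: mv_zero prj_def)
  then have "card (Kset m) = card (UNIV::'k set) ^ (2*0)" by simp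
  moreover have "(\<lambda>i. 0) \<in> Imset m"
    unfolding Imset_def M by (auto simp: mv_zero prj_def fun_eq_iff)
  ultimately show ?thesis unfolding M by blast
qed

lemma all_levels:
  "a \<le> m \<Longrightarrow> (\<exists>e. card (Kset a) = card (UNIV::'k set) ^ (2*e)) \<and>
   (\<forall>c' \<in> Midset m a. (\<forall>y \<in> Kset a. Bf m y c' = 0) \<longrightarrow> c' \<in> Imset a)"
proof (induction "m - a" arbitrary: a)
  case 0
  then have "a = m" by simp
  then show ?case using base_levels by simp
next
  case (Suc k)
  then have al: "a < m" by simp
  have IH: "(\<exists>e. card (Kset (Suc a)) = card (UNIV::'k set) ^ (2*e)) \<and>
   (\<forall>c' \<in> Midset m (Suc a). (\<forall>y \<in> Kset (Suc a). Bf m y c' = 0) \<longrightarrow> c' \<in> Imset (Suc a))"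
    using Suc by simp
  have st: "step U m a" using core_axioms al by (simp add: step_def step_axioms_def)
  show ?case using step.step_card[OF st] step.step_im[OF st] IH by blast
qed

lemma top_card:
  assumes m: "0 < m"
  shows "\<exists>e. card {x \<in> Midset m 0. mv m U x = pswap m x} = card (UNIV::'k set) ^ (2*e+1)"
proof -
  have st: "step U m 0" using core_axioms m by (simp add: step_def step_axioms_def)
  interpret step U m 0 by (rule st)
  have BiE: "Bi = 2*m-1" unfolding Bi_def by simp
  let ?T = "{x \<in> Midset m 0. mv m U x = pswap m x}"
  have mvx: "mv m U x = prj m 0 (mv m U x)" for x using prj_id[OF mv_Mid0] by simp
  have pw: "pswap m (bld al y be) = bld be y al" if y: "y \<in> Midset m (Suc 0)" for al be y
  proof -
    have "bld be y al \<in> Midset m 0" using bld_Mid[OF y] .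
    show ?thesis
    proof (rule ext)
      fix i
      show "pswap m (bld al y be) i = bld be y al i"
        using y Bi_facts Mid_Suc_ends[OF y] unfolding pswap_def BiE[symmetric] by (auto simp: bld_a bld_Bi bld_def ev_def)
    qed
  qed
  have Tchar: "mv m U x = pswap m x \<longleftrightarrow>
      (x 0 * tt + rr (prj m (Suc 0) x) + x Bi * ss = x Bi \<and>
       (\<lambda>i. Um (prj m (Suc 0) x) i + x Bi * cc i) = prj m (Suc 0) x \<and> x Bi * tt' = x 0)"
    if xm: "x \<in> Midset m 0" for x
  proof -
    have xd: "x = bld (x 0) (prj m (Suc 0) x) (x Bi)" by (rule decomp[OF xm])
    have m1: "(\<lambda>i. Um (prj m (Suc 0) x) i + x Bi * cc i) \<in> Midset m (Suc 0)"
      by (intro Midset_add Midset_smult Um_Mid cc_Mid)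
    have "mv m U x = prj m 0 (mv m U x)" by (rule mvx)
    also have "\<dots> = prj m 0 (mv m U (bld (x 0) (prj m (Suc 0) x) (x Bi)))"
      by (simp only: xd[symmetric])
    also have "\<dots> = bld (x 0 * tt + rr (prj m (Suc 0) x) + x Bi * ss)
          (\<lambda>i. Um (prj m (Suc 0) x) i + x Bi * cc i) (x Bi * tt')"
      by (rule mv_bld[OF prj_Midset])
    finally have E1: "mv m U x = bld (x 0 * tt + rr (prj m (Suc 0) x) + x Bi * ss)
          (\<lambda>i. Um (prj m (Suc 0) x) i + x Bi * cc i) (x Bi * tt')" .
    have "pswap m x = pswap m (bld (x 0) (prj m (Suc 0) x) (x Bi))" by (simp only: xd[symmetric])
    also have "\<dots> = bld (x Bi) (prj m (Suc 0) x) (x 0)" by (rule pw[OF prj_Midset])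
    finally have E2: "pswap m x = bld (x Bi) (prj m (Suc 0) x) (x 0)" .
    show ?thesis unfolding E1 E2 by (rule bld_inj[OF m1 prj_Midset])
  qed
  have bij: "bij_betw (\<lambda>x. (prj m (Suc 0) x, x Bi)) ?T Sset"
  proof (rule bij_betw_byWitness[where f' = "\<lambda>(y, d). bld (d * tt') y d"])
    show "\<forall>x\<in>?T. (\<lambda>(y, d). bld (d * tt') y d) (prj m (Suc 0) x, x Bi) = x"
    proof
      fix x assume x: "x \<in> ?T"
      have xm: "x \<in> Midset m 0" using x by simp
      have xd: "x = bld (x 0) (prj m (Suc 0) x) (x Bi)" by (rule decomp[OF xm])
      have "x Bi * tt' = x 0" using Tchar[OF xm] x by simp
      then show "(\<lambda>(y, d). bld (d * tt') y d) (prj m (Suc 0) x, x Bi) = x" using xd by simp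
    qed
    show "\<forall>p\<in>Sset. (\<lambda>x. (prj m (Suc 0) x, x Bi)) ((\<lambda>(y, d). bld (d * tt') y d) p) = p"
      unfolding Sset_def by (auto simp: bld_prj bld_Bi)
    show "(\<lambda>x. (prj m (Suc 0) x, x Bi)) ` ?T \<subseteq> Sset"
    proof (rule image_subsetI)
      fix x assume x: "x \<in> ?T"
      have xm: "x \<in> Midset m 0" using x by simp
      have e: "x 0 * tt + rr (prj m (Suc 0) x) + x Bi * ss = x Bi"
          "(\<lambda>i. Um (prj m (Suc 0) x) i + x Bi * cc i) = prj m (Suc 0) x" "x Bi * tt' = x 0"
        using Tchar[OF xm] x by auto
      have h: "x Bi * tt' * tt = x Bi"
      proof -
        have "x Bi * tt' * tt = x Bi * (tt * tt')" by (simp add: ac_simps)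
        also have "\<dots> = x Bi" using F1 by simp
        finally show ?thesis .
      qed
      have "x Bi * tt' * tt + rr (prj m (Suc 0) x) + x Bi * ss = x Bi" using e(1) e(3) by simp
      then have "rr (prj m (Suc 0) x) + x Bi * ss = 0" unfolding h by simp
      then show "(prj m (Suc 0) x, x Bi) \<in> Sset" unfolding Sset_def using e(2) prj_Midset by auto
    qed
    show "(\<lambda>(y, d). bld (d * tt') y d) ` Sset \<subseteq> ?T"
    proof (rule image_subsetI)
      fix p assume p: "p \<in> Sset"
      obtain y d where pd: "p = (y, d)" by (cases p)
      have ym: "y \<in> Midset m (Suc 0)" and e: "(\<lambda>i. Um y i + d * cc i) = y" and r: "rr y + d * ss = 0"
        using p unfolding Sset_def pd by auto
      have bm: "bld (d * tt') y d \<in> Midset m 0" by (rule bld_Mid[OF ym])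
      have "d * tt' * tt + rr y + d * ss = d" using F1 r by (simp add: algebra_simps)
      then have "mv m U (bld (d * tt') y d) = pswap m (bld (d * tt') y d)"
        using Tchar[OF bm] ym e by (simp add: bld_a bld_Bi bld_prj)
      then show "(\<lambda>(y, d). bld (d * tt') y d) p \<in> ?T" unfolding pd using bm by simp
    qed
  qed
  then have cT: "card ?T = card Sset" by (simp add: bij_betw_same_card)
  have L1: "(\<exists>e. card (Kset (Suc 0)) = card (UNIV::'k set) ^ (2*e)) \<and>
   (\<forall>c' \<in> Midset m (Suc 0). (\<forall>y \<in> Kset (Suc 0). Bf m y c' = 0) \<longrightarrow> c' \<in> Imset (Suc 0))"
    using all_levels[of "Suc 0"] m by simp
  then obtain e where e: "card (Kset (Suc 0)) = card (UNIV::'k set) ^ (2*e)" by blast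
  show ?thesis
  proof (cases "\<exists>z \<in> Midset m (Suc 0). (\<lambda>i. Um z i - z i) = cc")
    case True
    then obtain z where "z \<in> Midset m (Suc 0)" "(\<lambda>i. Um z i - z i) = cc" by blast
    then have "card ?T = card (UNIV::'k set) ^ (2*e+1)" using cT S_yes e by simp
    then show ?thesis by blast
  next
    case False
    have h: "card (UNIV::'k set) * card Sset = card (UNIV::'k set) ^ (2*e)" using S_no False L1 e by simp
    have "e \<noteq> 0"
    proof
      assume "e = 0"
      then have "card (UNIV::'k set) * card Sset = 1" using h by simp
      then show False using q_ge2 by (cases "card Sset") auto
    qed
    then obtain e' where e': "e = Suc e'" by (cases e) auto
    have pe: "card (UNIV::'k set) ^ (2*e) = card (UNIV::'k set) * card (UNIV::'k set) ^ (2*e'+1)"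
      unfolding e' by simp
    have "card (UNIV::'k set) * card Sset = card (UNIV::'k set) * card (UNIV::'k set) ^ (2*e'+1)"
      using h unfolding pe .
    then have "card Sset = card (UNIV::'k set) ^ (2*e'+1)" using q_ge2 by simp
    then have "card ?T = card (UNIV::'k set) ^ (2*e'+1)" using cT by simp
    then show ?thesis by (rule exI)
  qed
qed

end

(* ---- M1 ---- *)


section \<open>Valuation facts\<close>

locale nlf =
  fixes v :: "'a::field_char_0 \<Rightarrow> int" and res :: "'a \<Rightarrow> 'k::field" and w :: 'a
  assumes nlf: "nonarch_local_field_char0 v res"
  and w0: "w \<noteq> 0" and vw: "v w = 1"
begin

lemma vmult: "x \<noteq> 0 \<Longrightarrow> y \<noteq> 0 \<Longrightarrow> v (x * y) = v x + v y"
  using nlf unfolding nonarch_local_field_char0_def by blast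
lemma vadd: "x \<noteq> 0 \<Longrightarrow> y \<noteq> 0 \<Longrightarrow> x + y \<noteq> 0 \<Longrightarrow> min (v x) (v y) \<le> v (x + y)"
  using nlf unfolding nonarch_local_field_char0_def by blast
lemma res_add: "x \<in> Oring v \<Longrightarrow> y \<in> Oring v \<Longrightarrow> res (x + y) = res x + res y"
  using nlf unfolding nonarch_local_field_char0_def by blast
lemma res_mult: "x \<in> Oring v \<Longrightarrow> y \<in> Oring v \<Longrightarrow> res (x * y) = res x * res y"
  using nlf unfolding nonarch_local_field_char0_def by blast
lemma res_one: "res 1 = 1"
  using nlf unfolding nonarch_local_field_char0_def by blast
lemma res_surj: "\<exists>a \<in> Oring v. res a = y"
  using nlf unfolding nonarch_local_field_char0_def by (metis UNIV_I image_iff)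
lemma res_ker: "x \<in> Oring v \<Longrightarrow> res x = 0 \<longleftrightarrow> x \<in> pideal v"
  using nlf unfolding nonarch_local_field_char0_def by blast
lemma fin_k: "finite (UNIV :: 'k set)"
  using nlf unfolding nonarch_local_field_char0_def by blast

lemma v_one: "v 1 = 0" using vmult[of 1 1] by simp

lemma v_inv: "x \<noteq> 0 \<Longrightarrow> v (inverse x) = - v x"
  using vmult[of x "inverse x"] v_one by simp

lemma v_neg: "x \<noteq> 0 \<Longrightarrow> v (- x) = v x"
proof -
  assume x: "x \<noteq> 0"
  have "v (-1) + v (-1) = 0" using vmult[of "-1" "-1"] v_one by simp
  then have "v (-1) = 0" by simp
  then show ?thesis using vmult[of "-1" x] x by simp
qed

lemma O_zero[simp]: "0 \<in> Oring v" unfolding vball_def by simp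
lemma O_one[simp]: "1 \<in> Oring v" unfolding vball_def using v_one by simp
lemma O_mult: "x \<in> Oring v \<Longrightarrow> y \<in> Oring v \<Longrightarrow> x * y \<in> Oring v"
  unfolding vball_def by (cases "x = 0 \<or> y = 0") (auto simp: vmult)
lemma O_add: "x \<in> Oring v \<Longrightarrow> y \<in> Oring v \<Longrightarrow> x + y \<in> Oring v"
  unfolding vball_def using vadd by (smt (verit) add_0 add_cancel_right_right mem_Collect_eq)
lemma O_neg: "x \<in> Oring v \<Longrightarrow> - x \<in> Oring v"
  unfolding vball_def by (cases "x = 0") (auto simp: v_neg)
lemma O_diff: "x \<in> Oring v \<Longrightarrow> y \<in> Oring v \<Longrightarrow> x - y \<in> Oring v"
  using O_add[OF _ O_neg] by (metis diff_conv_add_uminus)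
lemma O_sum: "(\<And>i. i \<in> A \<Longrightarrow> f i \<in> Oring v) \<Longrightarrow> sum f A \<in> Oring v"
  by (induction A rule: infinite_finite_induct) (auto intro: O_add)
lemma p_sub_O: "x \<in> pideal v \<Longrightarrow> x \<in> Oring v" unfolding vball_def by auto
lemma w_p: "w \<in> pideal v" unfolding vball_def using vw by simp
lemma w_O: "w \<in> Oring v" using p_sub_O[OF w_p] .
lemma p_div_w: "x \<in> pideal v \<Longrightarrow> x * inverse w \<in> Oring v"
  unfolding vball_def using vmult[of x "inverse w"] v_inv[OF w0] vw w0 by (cases "x = 0") auto
lemma O_mult_w: "x \<in> Oring v \<Longrightarrow> w * x \<in> pideal v"
  unfolding vball_def using vmult[of w x] vw w0 by (cases "x = 0") auto

lemma res_zero[simp]: "res 0 = 0"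
proof -
  have "res (0 + 0) = res 0 + res 0" by (rule res_add) simp_all
  then show ?thesis by (metis add_cancel_right_right add_0)
qed
lemma res_neg: "x \<in> Oring v \<Longrightarrow> res (- x) = - res x"
proof -
  assume x: "x \<in> Oring v"
  have "res (x + - x) = res x + res (- x)" using x by (intro res_add O_neg)
  then have "res x + res (- x) = 0" by simp
  then show ?thesis by (metis add.commute eq_neg_iff_add_eq_0)
qed
lemma res_diff: "x \<in> Oring v \<Longrightarrow> y \<in> Oring v \<Longrightarrow> res (x - y) = res x - res y"
  using res_add[OF _ O_neg, of x y] res_neg[of y] by simp
lemma res_w: "res w = 0" using res_ker[OF w_O] w_p by simp
lemma res_sum: "(\<And>i. i \<in> A \<Longrightarrow> f i \<in> Oring v) \<Longrightarrow> res (sum f A) = (\<Sum>i\<in>A. res (f i))"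
proof (induction A rule: infinite_finite_induct)
  case (insert x F)
  then show ?case by (simp add: res_add O_sum)
qed auto
lemma res_p: "x \<in> pideal v \<Longrightarrow> res x = 0" using res_ker p_sub_O by blast

end

(* ---- M2 ---- *)


lemma SO_carrier: "g \<in> SO_odd n \<Longrightarrow> g \<in> carrier_mat (2*n+1) (2*n+1)"
  unfolding SO_odd_def by auto

lemma SO_mult:
  assumes g: "g \<in> SO_odd n" and h: "h \<in> SO_odd n"
  shows "g * h \<in> SO_odd n"
proof -
  have gc: "g \<in> carrier_mat (2*n+1) (2*n+1)" and hc: "h \<in> carrier_mat (2*n+1) (2*n+1)"
    using g h SO_carrier by auto
  have "det (g * h) = 1" using det_mult[OF gc hc] g h unfolding SO_odd_def by simp
  moreover have "qform n ((g * h) *\<^sub>v x) = qform n x" if x: "x \<in> carrier_vec (2*n+1)" for x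
  proof -
    have "(g * h) *\<^sub>v x = g *\<^sub>v (h *\<^sub>v x)" using gc hc x by simp
    moreover have "h *\<^sub>v x \<in> carrier_vec (2*n+1)" using hc x by simp
    ultimately show ?thesis using g h x unfolding SO_odd_def by simp
  qed
  ultimately show ?thesis unfolding SO_odd_def using gc hc by simp
qed

lemma sum_single:
  assumes "j0 < (N::nat)"
  shows "(\<Sum>j = 0..<N. (if j = j0 then a else 0) * b j) = a * (b j0 :: 'b :: comm_ring_1)"
proof -
  have "(\<Sum>j = 0..<N. (if j = j0 then a else 0) * b j) = (\<Sum>j = 0..<N. if j = j0 then a * b j else 0)"
    by (rule sum.cong) auto
  also have "\<dots> = a * b j0" using assms by (subst sum.delta) auto
  finally show ?thesis .
qed

lemma sum_single':
  assumes "j0 < (N::nat)"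
  shows "(\<Sum>j = 0..<N. b j * (if j = j0 then a else 0)) = (b j0 :: 'b :: comm_ring_1) * a"
  using sum_single[OF assms, of a b] by (simp add: mult.commute)

definition lw :: "'a::field \<Rightarrow> nat \<Rightarrow> nat \<Rightarrow> 'a" where
  "lw w n i = (if i < n then 1 else w)"
definition li :: "'a::field \<Rightarrow> nat \<Rightarrow> nat \<Rightarrow> 'a" where
  "li w n i = (if i < n then 1 else inverse w)"

lemma Lbasis_carrier[simp]: "Lbasis w n \<in> carrier_mat (2*n+1) (2*n+1)"
  unfolding Lbasis_def by simp
lemma Lbasis_inv_carrier[simp]: "Lbasis_inv w n \<in> carrier_mat (2*n+1) (2*n+1)"
  unfolding Lbasis_inv_def by simp
lemma Lbasis_dim[simp]: "dim_row (Lbasis w n) = 2*n+1" "dim_col (Lbasis w n) = 2*n+1"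
  "dim_row (Lbasis_inv w n) = 2*n+1" "dim_col (Lbasis_inv w n) = 2*n+1"
  unfolding Lbasis_def Lbasis_inv_def by simp_all

lemma diag_left:
  assumes A: "A \<in> carrier_mat (2*n+1) nc" and i: "i < 2*n+1" and j: "j < nc"
  shows "(Lbasis_inv w n * A) $$ (i,j) = li w n i * A $$ (i,j)"
proof -
  have "(Lbasis_inv w n * A) $$ (i,j) = (\<Sum>k = 0..<2*n+1. (if k = i then li w n i else 0) * A $$ (k,j))"
    using A i j unfolding Lbasis_inv_def li_def by (auto simp: scalar_prod_def intro!: sum.cong)
  also have "\<dots> = li w n i * A $$ (i,j)" using i by (rule sum_single)
  finally show ?thesis .
qed

lemma diag_right:
  assumes A: "A \<in> carrier_mat nr (2*n+1)" and i: "i < nr" and j: "j < 2*n+1"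
  shows "(A * Lbasis w n) $$ (i,j) = A $$ (i,j) * lw w n j"
proof -
  have "(A * Lbasis w n) $$ (i,j) = (\<Sum>k = 0..<2*n+1. A $$ (i,k) * (if k = j then lw w n j else 0))"
    using A i j unfolding Lbasis_def lw_def by (auto simp: scalar_prod_def intro!: sum.cong)
  also have "\<dots> = A $$ (i,j) * lw w n j" using j by (rule sum_single')
  finally show ?thesis .
qed

lemma conj_entry:
  assumes A: "A \<in> carrier_mat (2*n+1) (2*n+1)" and i: "i < 2*n+1" and j: "j < 2*n+1"
  shows "(Lbasis_inv w n * A * Lbasis w n) $$ (i,j) = li w n i * A $$ (i,j) * lw w n j"
proof -
  have c: "Lbasis_inv w n * A \<in> carrier_mat (2*n+1) (2*n+1)" using mult_carrier_mat[OF Lbasis_inv_carrier A] .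
  show ?thesis using diag_right[OF c i j] diag_left[OF A i j] by simp
qed

lemma conj_carrier: "A \<in> carrier_mat (2*n+1) (2*n+1) \<Longrightarrow> Lbasis_inv w n * A * Lbasis w n \<in> carrier_mat (2*n+1) (2*n+1)"
  by (rule mult_carrier_mat[OF mult_carrier_mat[OF Lbasis_inv_carrier] Lbasis_carrier])

lemma diag_right_inv:
  assumes A: "A \<in> carrier_mat nr (2*n+1)" and i: "i < nr" and j: "j < 2*n+1"
  shows "(A * Lbasis_inv w n) $$ (i,j) = A $$ (i,j) * li w n j"
proof -
  have "(A * Lbasis_inv w n) $$ (i,j) = (\<Sum>k = 0..<2*n+1. A $$ (i,k) * (if k = j then li w n j else 0))"
    using A i j unfolding Lbasis_inv_def li_def by (auto simp: scalar_prod_def intro!: sum.cong)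
  also have "\<dots> = A $$ (i,j) * li w n j" using j by (rule sum_single')
  finally show ?thesis .
qed

lemma Lbasis_mult_inv:
  assumes w: "(w::'a::field) \<noteq> 0"
  shows "Lbasis w n * Lbasis_inv w n = 1\<^sub>m (2*n+1)"
proof (rule eq_matI)
  fix i j assume i: "i < dim_row (1\<^sub>m (2*n+1) :: 'a mat)" and j: "j < dim_col (1\<^sub>m (2*n+1) :: 'a mat)"
  then have i': "i < 2*n+1" and j': "j < 2*n+1" by auto
  have e: "(Lbasis w n * Lbasis_inv w n) $$ (i,j) = Lbasis w n $$ (i,j) * li w n j"
    by (rule diag_right_inv[OF Lbasis_carrier i' j'])
  show "(Lbasis w n * Lbasis_inv w n) $$ (i,j) = 1\<^sub>m (2*n+1) $$ (i,j)"
    unfolding e using i' j' w unfolding Lbasis_def li_def by auto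
qed (auto simp: Lbasis_def Lbasis_inv_def)

(* ---- M3 ---- *)


definition gs :: "nat \<Rightarrow> nat \<Rightarrow> nat" where
  "gs n i = (if i = 0 then 2*n else if i = 2*n then 0 else i)"
definition ga :: "'a::field \<Rightarrow> nat \<Rightarrow> nat \<Rightarrow> 'a" where
  "ga w n i = (if i = 0 then inverse w else if i = 2*n then w else if i = n then -1 else 1)"
definition gmat :: "'a::field \<Rightarrow> nat \<Rightarrow> 'a mat" where
  "gmat w n = mat (2*n+1) (2*n+1) (\<lambda>(i,j). if j = gs n i then ga w n i else 0)"
definition dg :: "'a::field \<Rightarrow> nat \<Rightarrow> nat \<Rightarrow> 'a" where
  "dg w n i = (if i = 0 then w else if i = 2*n then inverse w else if i = n then -1 else 1)"

lemma gs_lt: "i < 2*n+1 \<Longrightarrow> gs n i < 2*n+1" unfolding gs_def by auto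
lemma gs_gs: "0 < n \<Longrightarrow> gs n (gs n i) = i" unfolding gs_def by auto

lemma gmat_carrier[simp]: "gmat w n \<in> carrier_mat (2*n+1) (2*n+1)" unfolding gmat_def by simp
lemma gmat_dim[simp]: "dim_row (gmat w n) = 2*n+1" "dim_col (gmat w n) = 2*n+1" unfolding gmat_def by simp_all

lemma g_mult_vec:
  assumes x: "x \<in> carrier_vec (2*n+1)" and i: "i < 2*n+1"
  shows "(gmat w n *\<^sub>v x) $ i = ga w n i * x $ gs n i"
proof -
  have "(gmat w n *\<^sub>v x) $ i = (\<Sum>j = 0..<2*n+1. (if j = gs n i then ga w n i else 0) * x $ j)"
    using x i unfolding gmat_def by (auto simp: scalar_prod_def intro!: sum.cong)
  also have "\<dots> = ga w n i * x $ gs n i" using gs_lt[OF i] by (rule sum_single)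
  finally show ?thesis .
qed

lemma g_mult_mat:
  assumes A: "A \<in> carrier_mat (2*n+1) nc" and i: "i < 2*n+1" and j: "j < nc"
  shows "(gmat w n * A) $$ (i,j) = ga w n i * A $$ (gs n i, j)"
proof -
  have "(gmat w n * A) $$ (i,j) = (\<Sum>k = 0..<2*n+1. (if k = gs n i then ga w n i else 0) * A $$ (k, j))"
    using A i j unfolding gmat_def by (auto simp: scalar_prod_def intro!: sum.cong)
  also have "\<dots> = ga w n i * A $$ (gs n i, j)" using gs_lt[OF i] by (rule sum_single)
  finally show ?thesis .
qed

lemma ga_ga:
  assumes n: "0 < n" and w: "w \<noteq> 0"
  shows "ga w n i * ga w n (gs n i) = 1"
  using n w unfolding ga_def gs_def by auto

lemma g_g:
  assumes n: "0 < n" and w: "(w::'a::field) \<noteq> 0"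
  shows "gmat w n * gmat w n = 1\<^sub>m (2*n+1)"
proof (rule eq_matI)
  fix i j assume i: "i < dim_row (1\<^sub>m (2*n+1) :: 'a mat)" and j: "j < dim_col (1\<^sub>m (2*n+1) :: 'a mat)"
  then have i': "i < 2*n+1" and j': "j < 2*n+1" by auto
  have "(gmat w n * gmat w n) $$ (i,j) = ga w n i * gmat w n $$ (gs n i, j)"
    by (rule g_mult_mat[OF gmat_carrier i' j'])
  also have "\<dots> = (if j = i then ga w n i * ga w n (gs n i) else 0)"
    using gs_lt[OF i'] j' gs_gs[OF n] unfolding gmat_def by auto
  also have "\<dots> = 1\<^sub>m (2*n+1) $$ (i,j)" using ga_ga[OF n w] i' j' by simp
  finally show "(gmat w n * gmat w n) $$ (i,j) = 1\<^sub>m (2*n+1) $$ (i,j)" .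
qed auto

lemma g_det:
  assumes n: "0 < n" and w: "(w::'a::field) \<noteq> 0"
  shows "det (gmat w n) = 1"
proof -
  let ?D = "mat (2*n+1) (2*n+1) (\<lambda>(i,j). if i = j then dg w n i else 0) :: 'a mat"
  let ?S = "swaprows_mat (2*n+1) 0 (2*n) :: 'a mat"
  have Dc: "?D \<in> carrier_mat (2*n+1) (2*n+1)" by simp
  have Sc: "?S \<in> carrier_mat (2*n+1) (2*n+1)" unfolding swaprows_mat_def by simp
  have eq: "gmat w n = ?S * ?D"
  proof (rule eq_matI)
    fix i j assume i: "i < dim_row (?S * ?D)" and j: "j < dim_col (?S * ?D)"
    then have i': "i < 2*n+1" and j': "j < 2*n+1" using Sc by auto
    have "(?S * ?D) $$ (i,j) = (\<Sum>k = 0..<2*n+1. ?S $$ (i,k) * (if k = j then dg w n j else 0))"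
      using i' j' by (auto simp: scalar_prod_def intro!: sum.cong)
    also have "\<dots> = ?S $$ (i,j) * dg w n j" using j' by (rule sum_single')
    also have "\<dots> = gmat w n $$ (i,j)"
      using i' j' n unfolding swaprows_mat_def gmat_def gs_def ga_def dg_def by auto
    finally show "gmat w n $$ (i,j) = (?S * ?D) $$ (i,j)" by simp
  qed (use Sc in auto)
  have ut: "upper_triangular ?D" unfolding upper_triangular_def by auto
  have "det ?D = (\<Prod>i = 0..<2*n+1. dg w n i)"
    using det_upper_triangular[OF ut Dc] by (simp add: prod_list_diag_prod)
  also have "\<dots> = (\<Prod>i = 0..<2*n+1. (if i = 0 then w else 1) * ((if i = 2*n then inverse w else 1) * (if i = n then -1 else 1)))"
    using n by (intro prod.cong) (auto simp: dg_def)
  also have "\<dots> = w * inverse w * (-1)"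
    by (simp add: prod.distrib prod.delta)
  also have "\<dots> = -1" using w by simp
  finally have dD: "det ?D = -1" .
  have dS: "det ?S = -1" using n by (intro det_swaprows_mat) auto
  show ?thesis unfolding eq det_mult[OF Sc Dc] dD dS by simp
qed

lemma qform_formula:
  assumes x: "(x :: 'a::field_char_0 vec) \<in> carrier_vec (2*n+1)"
  shows "qform n x = (\<Sum>i<n. x $ i * x $ (2*n-i)) + x $ n * x $ n"
proof -
  let ?c = "\<lambda>i. if i = n then 2 else (1::'a)"
  have gv: "(gram n *\<^sub>v x) $ i = ?c i * x $ (2*n - i)" if i: "i < 2*n+1" for i
  proof -
    have "(gram n *\<^sub>v x) $ i = (\<Sum>j = 0..<2*n+1. (if j = 2*n - i then ?c i else 0) * x $ j)"
      using x i unfolding gram_def by (auto simp: scalar_prod_def intro!: sum.cong)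
    also have "\<dots> = ?c i * x $ (2*n - i)" using i by (intro sum_single) auto
    finally show ?thesis .
  qed
  let ?f = "\<lambda>i. x $ i * x $ (2*n - i)"
  have "x \<bullet> (gram n *\<^sub>v x) = (\<Sum>i = 0..<2*n+1. ?c i * ?f i)"
    unfolding scalar_prod_def using x gv by (auto simp: gram_def intro!: sum.cong)
  also have "\<dots> = (\<Sum>i \<in> {0..<n} \<union> {n} \<union> {n+1..<2*n+1}. ?c i * ?f i)"
    by (rule sum.cong) auto
  also have "\<dots> = (\<Sum>i = 0..<n. ?c i * ?f i) + ?c n * ?f n + (\<Sum>i = n+1..<2*n+1. ?c i * ?f i)"
    by (subst sum.union_disjoint; auto)+
  also have "(\<Sum>i = n+1..<2*n+1. ?c i * ?f i) = (\<Sum>i = 0..<n. ?f i)"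
  proof (rule sum.reindex_bij_witness[of _ "\<lambda>i. 2*n - i" "\<lambda>i. 2*n - i"])
    fix i assume i: "i \<in> {n+1..<2*n+1}"
    show "2*n - i \<in> {0..<n}" using i by auto
    show "2*n - (2*n - i) = i" using i by auto
    show "?f (2*n - i) = ?c i * ?f i" using i by (auto simp: mult.commute)
  next
    fix i assume i: "i \<in> {0..<n}"
    show "2*n - i \<in> {n+1..<2*n+1}" using i by auto
    show "2*n - (2*n - i) = i" using i by auto
  qed
  also have "(\<Sum>i = 0..<n. ?c i * ?f i) = (\<Sum>i = 0..<n. ?f i)" by (rule sum.cong) auto
  finally have "x \<bullet> (gram n *\<^sub>v x) = 2 * ((\<Sum>i = 0..<n. ?f i) + ?f n)" by simp
  then show ?thesis unfolding qform_def by (simp add: atLeast0LessThan)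
qed

lemma g_qform:
  assumes n: "0 < n" and w: "(w::'a::field_char_0) \<noteq> 0" and x: "x \<in> carrier_vec (2*n+1)"
  shows "qform n (gmat w n *\<^sub>v x) = qform n x"
proof -
  have gx: "gmat w n *\<^sub>v x \<in> carrier_vec (2*n+1)" using mult_mat_vec_carrier[OF gmat_carrier x] .
  have t: "(gmat w n *\<^sub>v x) $ i * (gmat w n *\<^sub>v x) $ (2*n-i) = x $ i * x $ (2*n-i)" if i: "i < n" for i
    using i n w g_mult_vec[OF x, of i w] g_mult_vec[OF x, of "2*n-i" w]
    by (cases "i = 0") (auto simp: ga_def gs_def)
  have tn: "(gmat w n *\<^sub>v x) $ n * (gmat w n *\<^sub>v x) $ n = x $ n * x $ n"
    using n g_mult_vec[OF x, of n w] by (auto simp: ga_def gs_def)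
  show ?thesis unfolding qform_formula[OF gx] qform_formula[OF x] tn using t by simp
qed

lemma g_SO:
  assumes n: "0 < n" and w: "(w::'a::field_char_0) \<noteq> 0"
  shows "gmat w n \<in> SO_odd n"
  unfolding SO_odd_def using g_det[OF n w] g_qform[OF n w] gmat_carrier[of w n] by blast

(* ---- M4 ---- *)


lemma L_mem: "x \<in> lattice_L v n \<longleftrightarrow> x \<in> carrier_vec (2*n+1) \<and>
   (\<forall>i < 2*n+1. x $ i \<in> (if i < n then Oring v else pideal v))"
  unfolding lattice_L_def by simp

lemma L_carrier: "x \<in> lattice_L v n \<Longrightarrow> x \<in> carrier_vec (2*n+1)"
  unfolding lattice_L_def by simp

lemma inv_upper:
  assumes b: "b \<in> carrier_mat N N" and c: "c \<in> carrier_mat N N"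
  and ut: "\<forall>i < N. \<forall>j < i. b $$ (i,j) = 0"
  and diag: "\<forall>i < N. b $$ (i,i) \<noteq> (0::'a::field)"
  and cb: "c * b = 1\<^sub>m N"
  shows "\<forall>i < N. \<forall>j < i. c $$ (i,j) = 0"
proof (intro allI impI)
  fix i j assume i: "i < N" and ji: "j < i"
  then show "c $$ (i,j) = 0"
  proof (induction j rule: less_induct)
    case (less j)
    have jN: "j < N" using less.prems by simp
    have "(c * b) $$ (i,j) = 0" using cb i jN less.prems by simp
    moreover have "(c * b) $$ (i,j) = (\<Sum>k = 0..<N. c $$ (i,k) * b $$ (k,j))"
      using b c i jN by (simp add: scalar_prod_def)
    moreover have "(\<Sum>k = 0..<N. c $$ (i,k) * b $$ (k,j)) = (\<Sum>k = 0..<N. if k = j then c $$ (i,j) * b $$ (j,j) else 0)"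
    proof (rule sum.cong[OF refl])
      fix k assume k: "k \<in> {0..<N}"
      consider "k < j" | "k = j" | "j < k" by linarith
      then show "c $$ (i,k) * b $$ (k,j) = (if k = j then c $$ (i,j) * b $$ (j,j) else 0)"
      proof cases
        case 1 then show ?thesis using less.IH[of k] less.prems by simp
      next
        case 3 then show ?thesis using ut k by simp
      qed simp
    qed
    moreover have "\<dots> = c $$ (i,j) * b $$ (j,j)" using jN by (subst sum.delta) auto
    ultimately show ?case using diag jN by simp
  qed
qed

definition ins :: "nat \<Rightarrow> nat \<Rightarrow> nat" where "ins n k = (if k < n then k else Suc k)"

lemma mat_delete_idx:
  assumes A: "A \<in> carrier_mat (Suc N) (Suc N)" and i: "i < N" and j: "j < N"
  shows "mat_delete A p p $$ (i,j) = A $$ (ins p i, ins p j)"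
  using A i j unfolding mat_delete_def ins_def by auto

lemma mat_delete_carrier': "A \<in> carrier_mat (Suc N) (Suc N) \<Longrightarrow> mat_delete A p p \<in> carrier_mat N N"
  using mat_delete_carrier[of A "Suc N" "Suc N" p p] by simp

lemma sum_ins:
  assumes p: "p < Suc N"
  shows "(\<Sum>k = 0..<Suc N. f k) = f p + (\<Sum>k = 0..<N. f (ins p k))"
proof -
  have inj: "inj_on (ins p) {0..<N}" unfolding inj_on_def ins_def by auto
  have im: "ins p ` {0..<N} = {0..<Suc N} - {p}"
  proof
    show "ins p ` {0..<N} \<subseteq> {0..<Suc N} - {p}" unfolding ins_def by auto
    show "{0..<Suc N} - {p} \<subseteq> ins p ` {0..<N}"
    proof
      fix k assume k: "k \<in> {0..<Suc N} - {p}"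
      show "k \<in> ins p ` {0..<N}"
      proof (cases "k < p")
        case True then have "ins p k = k" "k < N" using k p unfolding ins_def by auto
        then show ?thesis by (metis atLeastLessThan_iff image_eqI zero_le)
      next
        case False then have "k > p" using k by auto
        then have "ins p (k - 1) = k" "k - 1 < N" using k unfolding ins_def by auto
        then show ?thesis by (metis atLeastLessThan_iff image_eqI zero_le)
      qed
    qed
  qed
  have "(\<Sum>k = 0..<Suc N. f k) = f p + (\<Sum>k \<in> {0..<Suc N} - {p}. f k)"
    using p by (subst sum.remove[of _ p]) auto
  also have "(\<Sum>k \<in> {0..<Suc N} - {p}. f k) = (\<Sum>k = 0..<N. f (ins p k))"
    unfolding im[symmetric] by (rule sum.reindex[OF inj, unfolded comp_def])
  finally show ?thesis .
qed

context nlf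
begin

lemma p_zero[simp]: "0 \<in> pideal v" unfolding vball_def by simp

lemma p_neg: "x \<in> pideal v \<Longrightarrow> - x \<in> pideal v"
  unfolding vball_def by (cases "x = 0") (auto simp: v_neg)

lemma g_L:
  assumes n: "0 < n" and x: "x \<in> lattice_L v n"
  shows "gmat w n *\<^sub>v x \<in> lattice_L v n"
proof -
  have xc: "x \<in> carrier_vec (2*n+1)" using x L_carrier by blast
  have xi: "\<And>i. i < 2*n+1 \<Longrightarrow> x $ i \<in> (if i < n then Oring v else pideal v)" using x L_mem by blast
  show ?thesis unfolding L_mem
  proof (intro conjI allI impI)
    show "gmat w n *\<^sub>v x \<in> carrier_vec (2*n+1)" using mult_mat_vec_carrier[OF gmat_carrier xc] .
    fix i assume i: "i < 2*n+1"
    have e: "(gmat w n *\<^sub>v x) $ i = ga w n i * x $ gs n i" by (rule g_mult_vec[OF xc i])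
    consider "i = 0" | "i = 2*n" | "i = n" | "i \<noteq> 0 \<and> i \<noteq> 2*n \<and> i \<noteq> n" by blast
    then show "(gmat w n *\<^sub>v x) $ i \<in> (if i < n then Oring v else pideal v)"
    proof cases
      case 1
      have "x $ (2*n) \<in> pideal v" using xi[of "2*n"] n by auto
      then have "x $ (2*n) * inverse w \<in> Oring v" by (rule p_div_w)
      then show ?thesis using 1 n e by (simp add: ga_def gs_def mult.commute)
    next
      case 2
      have "x $ 0 \<in> Oring v" using xi[of 0] n by auto
      then show ?thesis using 2 n e O_mult_w by (simp add: ga_def gs_def)
    next
      case 3
      have "x $ n \<in> pideal v" using xi[of n] n by auto
      then show ?thesis using 3 n e p_neg by (simp add: ga_def gs_def)
    next
      case 4
      then show ?thesis using e xi[OF i] by (simp add: ga_def gs_def)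
    qed
  qed
qed

lemma g_image_L:
  assumes n: "0 < n"
  shows "(\<lambda>x. gmat w n *\<^sub>v x) ` lattice_L v n = lattice_L v n"
proof
  show "(\<lambda>x. gmat w n *\<^sub>v x) ` lattice_L v n \<subseteq> lattice_L v n" using g_L[OF n] by auto
  show "lattice_L v n \<subseteq> (\<lambda>x. gmat w n *\<^sub>v x) ` lattice_L v n"
  proof
    fix x assume x: "x \<in> lattice_L v n"
    have xc: "x \<in> carrier_vec (2*n+1)" using x L_carrier by blast
    have "gmat w n *\<^sub>v (gmat w n *\<^sub>v x) = (gmat w n * gmat w n) *\<^sub>v x"
      using xc by (simp add: assoc_mult_mat_vec[OF gmat_carrier gmat_carrier xc])
    also have "\<dots> = x" using g_g[OF n w0] xc by simp
    finally show "x \<in> (\<lambda>x. gmat w n *\<^sub>v x) ` lattice_L v n" using g_L[OF n x] by (metis image_eqI)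
  qed
qed

lemma image_L_mult:
  assumes A: "A \<in> carrier_mat (2*n+1) (2*n+1)" and B: "B \<in> carrier_mat (2*n+1) (2*n+1)"
  and AL: "(\<lambda>x. A *\<^sub>v x) ` lattice_L v n = lattice_L v n"
  and BL: "(\<lambda>x. B *\<^sub>v x) ` lattice_L v n = lattice_L v n"
  shows "(\<lambda>x. (A * B) *\<^sub>v x) ` lattice_L v n = lattice_L v n"
proof -
  have "(\<lambda>x. (A * B) *\<^sub>v x) ` lattice_L v n = (\<lambda>x. A *\<^sub>v x) ` ((\<lambda>x. B *\<^sub>v x) ` lattice_L v n)"
    unfolding image_image
    by (rule image_cong[OF refl]) (use A B L_carrier in \<open>auto intro!: assoc_mult_mat_vec\<close>)
  then show ?thesis using AL BL by simp
qed

lemma lw_L: "j < 2*n+1 \<Longrightarrow> lw w n j \<cdot>\<^sub>v unit_vec (2*n+1) j \<in> lattice_L v n"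
  unfolding L_mem lw_def using w_p p_sub_O by (auto simp: unit_vec_def)

lemma conj_integral:
  assumes h: "h \<in> carrier_mat (2*n+1) (2*n+1)"
  and hL: "(\<lambda>x. h *\<^sub>v x) ` lattice_L v n \<subseteq> lattice_L v n"
  and i: "i < 2*n+1" and j: "j < 2*n+1"
  shows "(Lbasis_inv w n * h * Lbasis w n) $$ (i,j) \<in> Oring v"
proof -
  let ?e = "lw w n j \<cdot>\<^sub>v unit_vec (2*n+1) j"
  have "h *\<^sub>v ?e \<in> lattice_L v n" using hL lw_L[OF j] by auto
  then have m: "(h *\<^sub>v ?e) $ i \<in> (if i < n then Oring v else pideal v)" using i L_mem by blast
  have "(h *\<^sub>v ?e) $ i = (\<Sum>k = 0..<2*n+1. h $$ (i,k) * (if k = j then lw w n j else 0))"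
    using h i j by (auto simp: scalar_prod_def unit_vec_def intro!: sum.cong)
  also have "\<dots> = h $$ (i,j) * lw w n j" using j by (rule sum_single')
  finally have e: "(h *\<^sub>v ?e) $ i = h $$ (i,j) * lw w n j" .
  show ?thesis
  proof (cases "i < n")
    case True
    then show ?thesis using m e conj_entry[OF h i j] by (simp add: li_def)
  next
    case False
    then have "h $$ (i,j) * lw w n j \<in> pideal v" using m e by simp
    then have "h $$ (i,j) * lw w n j * inverse w \<in> Oring v" by (rule p_div_w)
    then show ?thesis using False conj_entry[OF h i j] by (simp add: li_def mult.commute mult.left_commute)
  qed
qed

definition "rmat A = map_mat res A"

lemma rmat_mult:
  assumes A: "A \<in> carrier_mat N N" and B: "B \<in> carrier_mat N N"
  and AO: "\<forall>i<N. \<forall>j<N. A $$ (i,j) \<in> Oring v" and BO: "\<forall>i<N. \<forall>j<N. B $$ (i,j) \<in> Oring v"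
  shows "rmat (A * B) = rmat A * rmat B"
proof (rule eq_matI)
  fix i j assume i: "i < dim_row (rmat A * rmat B)" and j: "j < dim_col (rmat A * rmat B)"
  then have i': "i < N" and j': "j < N" using A B by (auto simp: rmat_def)
  have "rmat (A * B) $$ (i,j) = res (\<Sum>k = 0..<N. A $$ (i,k) * B $$ (k,j))"
    using A B i' j' by (simp add: rmat_def scalar_prod_def)
  also have "\<dots> = (\<Sum>k = 0..<N. res (A $$ (i,k)) * res (B $$ (k,j)))"
    using AO BO i' j' by (subst res_sum) (auto intro!: sum.cong O_mult res_mult)
  also have "\<dots> = (rmat A * rmat B) $$ (i,j)"
    using A B i' j' by (simp add: rmat_def scalar_prod_def)
  finally show "rmat (A * B) $$ (i,j) = (rmat A * rmat B) $$ (i,j)" .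
qed (use A B in \<open>auto simp: rmat_def\<close>)

end

(* ---- M5 ---- *)


lemma mat_delete_mult:
  assumes A: "A \<in> carrier_mat (Suc N) (Suc N)" and B: "B \<in> carrier_mat (Suc N) (Suc N)"
  and p: "p < Suc N" and Bp: "\<And>j. j < Suc N \<Longrightarrow> j \<noteq> p \<Longrightarrow> B $$ (p, j) = 0"
  shows "mat_delete (A * B) p p = mat_delete A p p * mat_delete B p p"
proof (rule eq_matI)
  have Ad: "mat_delete A p p \<in> carrier_mat N N" using mat_delete_carrier'[OF A] .
  have Bd: "mat_delete B p p \<in> carrier_mat N N" using mat_delete_carrier'[OF B] .
  fix i j assume i: "i < dim_row (mat_delete A p p * mat_delete B p p)"
    and j: "j < dim_col (mat_delete A p p * mat_delete B p p)"
  then have i': "i < N" and j': "j < N" using Ad Bd by auto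
  have insi: "ins p i < Suc N" and insj: "ins p j < Suc N" and nj: "ins p j \<noteq> p"
    using i' j' unfolding ins_def by auto
  have "mat_delete (A * B) p p $$ (i,j) = (A * B) $$ (ins p i, ins p j)"
    using mat_delete_idx[OF mult_carrier_mat[OF A B] i' j'] .
  also have "\<dots> = (\<Sum>k = 0..<Suc N. A $$ (ins p i, k) * B $$ (k, ins p j))"
    using A B insi insj by (simp add: scalar_prod_def)
  also have "\<dots> = A $$ (ins p i, p) * B $$ (p, ins p j) + (\<Sum>k = 0..<N. A $$ (ins p i, ins p k) * B $$ (ins p k, ins p j))"
    by (rule sum_ins[OF p])
  also have "A $$ (ins p i, p) * B $$ (p, ins p j) = 0" using Bp[OF insj nj] by simp
  also have "(\<Sum>k = 0..<N. A $$ (ins p i, ins p k) * B $$ (ins p k, ins p j)) =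
     (\<Sum>k = 0..<N. mat_delete A p p $$ (i, k) * mat_delete B p p $$ (k, j))"
    by (rule sum.cong[OF refl]) (use mat_delete_idx[OF A] mat_delete_idx[OF B] i' j' in auto)
  also have "\<dots> = (mat_delete A p p * mat_delete B p p) $$ (i,j)"
  proof -
    have "(mat_delete A p p * mat_delete B p p) $$ (i,j) = row (mat_delete A p p) i \<bullet> col (mat_delete B p p) j"
      by (rule index_mult_mat(1)) (use Ad Bd i' j' in auto)
    also have "\<dots> = (\<Sum>k = 0..<N. mat_delete A p p $$ (i, k) * mat_delete B p p $$ (k, j))"
      unfolding scalar_prod_def using carrier_matD[OF Ad] carrier_matD[OF Bd] i' j' by (intro sum.cong) auto
    finally show ?thesis by simp
  qed
  finally show "mat_delete (A * B) p p $$ (i,j) = (mat_delete A p p * mat_delete B p p) $$ (i,j)" by simp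
qed (use A B in auto)

context nlf
begin

lemma Pg_entry:
  assumes n: "0 < n" and i: "i < 2*n+1" and j: "j < 2*n+1"
  shows "(Lbasis_inv w n * gmat w n * Lbasis w n) $$ (i,j) = (if j = gs n i then (if i = n then -1 else 1) else 0)"
proof -
  have e: "(Lbasis_inv w n * gmat w n * Lbasis w n) $$ (i,j) = li w n i * gmat w n $$ (i,j) * lw w n j"
    by (rule conj_entry[OF gmat_carrier i j])
  show ?thesis unfolding e using n i j w0 unfolding gmat_def li_def lw_def gs_def ga_def by auto
qed

lemma rPg_entry:
  assumes n: "0 < n" and i: "i < 2*n+1" and j: "j < 2*n+1"
  shows "rmat (Lbasis_inv w n * gmat w n * Lbasis w n) $$ (i,j) = (if j = gs n i then (if i = n then -1 else 1) else 0)"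
proof -
  have c: "Lbasis_inv w n * gmat w n * Lbasis w n \<in> carrier_mat (2*n+1) (2*n+1)" by (rule conj_carrier[OF gmat_carrier])
  show ?thesis using c i j Pg_entry[OF n i j] res_one res_neg[OF O_one] by (simp add: rmat_def)
qed

lemma rPg_carrier: "rmat (Lbasis_inv w n * gmat w n * Lbasis w n) \<in> carrier_mat (Suc (2*n)) (Suc (2*n))"
proof -
  have "Lbasis_inv w n * gmat w n * Lbasis w n \<in> carrier_mat (2*n+1) (2*n+1)" by (rule conj_carrier[OF gmat_carrier])
  then show ?thesis by (simp add: rmat_def)
qed

lemma P_eq:
  assumes n: "0 < n"
  shows "mat_delete (rmat (Lbasis_inv w n * gmat w n * Lbasis w n)) n n = swaprows_mat (2*n) 0 (2*n-1)"
proof (rule eq_matI)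
  fix i j assume i: "i < dim_row (swaprows_mat (2*n) 0 (2*n-1) :: 'k mat)" and j: "j < dim_col (swaprows_mat (2*n) 0 (2*n-1) :: 'k mat)"
  then have i': "i < 2*n" and j': "j < 2*n" unfolding swaprows_mat_def by auto
  have "mat_delete (rmat (Lbasis_inv w n * gmat w n * Lbasis w n)) n n $$ (i,j) =
     rmat (Lbasis_inv w n * gmat w n * Lbasis w n) $$ (ins n i, ins n j)"
    by (rule mat_delete_idx[OF rPg_carrier i' j'])
  also have "\<dots> = (if ins n j = gs n (ins n i) then (if ins n i = n then -1 else 1) else 0)"
    by (rule rPg_entry[OF n]) (use i' j' in \<open>auto simp: ins_def\<close>)
  also have "\<dots> = swaprows_mat (2*n) 0 (2*n-1) $$ (i,j)"
    using i' j' n unfolding swaprows_mat_def ins_def gs_def by auto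
  finally show "mat_delete (rmat (Lbasis_inv w n * gmat w n * Lbasis w n)) n n $$ (i,j) = swaprows_mat (2*n) 0 (2*n-1) $$ (i,j)" .
qed (use carrier_matD[OF rPg_carrier[of n]] in \<open>auto simp: swaprows_mat_def\<close>)

end

(* ---- M6 ---- *)


definition QK :: "nat \<Rightarrow> 'k::field vec \<Rightarrow> 'k" where
  "QK n y = (\<Sum>i<n. y $ i * y $ (2*n-1-i))"

lemma mult_vec_idx:
  assumes A: "A \<in> carrier_mat nr nc" and y: "y \<in> carrier_vec nc" and i: "i < nr"
  shows "(A *\<^sub>v y) $ i = (\<Sum>k = 0..<nc. A $$ (i,k) * y $ k)"
  using A y i by (auto simp: scalar_prod_def intro!: sum.cong)

context nlf
begin

lemma Lb_mult_vec:
  assumes u: "u \<in> carrier_vec (2*n+1)" and i: "i < 2*n+1"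
  shows "(Lbasis w n *\<^sub>v u) $ i = lw w n i * u $ i"
proof -
  have "(Lbasis w n *\<^sub>v u) $ i = (\<Sum>k = 0..<2*n+1. (if k = i then lw w n i else 0) * u $ k)"
    using u i unfolding Lbasis_def lw_def by (auto simp: scalar_prod_def intro!: sum.cong)
  also have "\<dots> = lw w n i * u $ i" using i by (rule sum_single)
  finally show ?thesis .
qed

lemma qform_Lb:
  assumes u: "u \<in> carrier_vec (2*n+1)"
  shows "qform n (Lbasis w n *\<^sub>v u) = w * ((\<Sum>i<n. u $ i * u $ (2*n-i)) + w * (u $ n * u $ n))"
proof -
  have Lu: "Lbasis w n *\<^sub>v u \<in> carrier_vec (2*n+1)" using mult_mat_vec_carrier[OF Lbasis_carrier u] .
  have "qform n (Lbasis w n *\<^sub>v u) = (\<Sum>i<n. (Lbasis w n *\<^sub>v u) $ i * (Lbasis w n *\<^sub>v u) $ (2*n-i))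
      + (Lbasis w n *\<^sub>v u) $ n * (Lbasis w n *\<^sub>v u) $ n"
    by (rule qform_formula[OF Lu])
  also have "(\<Sum>i<n. (Lbasis w n *\<^sub>v u) $ i * (Lbasis w n *\<^sub>v u) $ (2*n-i)) = (\<Sum>i<n. w * (u $ i * u $ (2*n-i)))"
  proof (rule sum.cong[OF refl])
    fix i assume i: "i \<in> {..<n}"
    have e1: "(Lbasis w n *\<^sub>v u) $ i = lw w n i * u $ i" by (rule Lb_mult_vec[OF u]) (use i in simp)
    have e2: "(Lbasis w n *\<^sub>v u) $ (2*n-i) = lw w n (2*n-i) * u $ (2*n-i)" by (rule Lb_mult_vec[OF u]) (use i in simp)
    show "(Lbasis w n *\<^sub>v u) $ i * (Lbasis w n *\<^sub>v u) $ (2*n-i) = w * (u $ i * u $ (2*n-i))"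
      unfolding e1 e2 using i by (simp add: lw_def)
  qed
  also have "(Lbasis w n *\<^sub>v u) $ n * (Lbasis w n *\<^sub>v u) $ n = w * (w * (u $ n * u $ n))"
  proof -
    have e: "(Lbasis w n *\<^sub>v u) $ n = lw w n n * u $ n" by (rule Lb_mult_vec[OF u]) simp
    show ?thesis unfolding e by (simp add: lw_def)
  qed
  finally show ?thesis by (simp add: sum_distrib_left algebra_simps)
qed

lemma conj_mult_vec:
  assumes c: "c \<in> carrier_mat (2*n+1) (2*n+1)" and x: "x \<in> carrier_vec (2*n+1)" and i: "i < 2*n+1"
  shows "((Lbasis_inv w n * c * Lbasis w n) *\<^sub>v x) $ i = li w n i * (\<Sum>k = 0..<2*n+1. c $$ (i,k) * lw w n k * x $ k)"
proof -
  have M: "Lbasis_inv w n * c * Lbasis w n \<in> carrier_mat (2*n+1) (2*n+1)" by (rule conj_carrier[OF c])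
  have "((Lbasis_inv w n * c * Lbasis w n) *\<^sub>v x) $ i = (\<Sum>k = 0..<2*n+1. (Lbasis_inv w n * c * Lbasis w n) $$ (i,k) * x $ k)"
    using M x i by (auto simp: scalar_prod_def intro!: sum.cong)
  also have "\<dots> = (\<Sum>k = 0..<2*n+1. li w n i * (c $$ (i,k) * lw w n k * x $ k))"
    by (rule sum.cong[OF refl]) (use conj_entry[OF c i] in auto)
  finally show ?thesis unfolding sum_distrib_left .
qed

lemma c_Lb:
  assumes c: "c \<in> carrier_mat (2*n+1) (2*n+1)" and x: "x \<in> carrier_vec (2*n+1)"
  shows "c *\<^sub>v (Lbasis w n *\<^sub>v x) = Lbasis w n *\<^sub>v ((Lbasis_inv w n * c * Lbasis w n) *\<^sub>v x)"
proof (rule eq_vecI)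
  have M: "Lbasis_inv w n * c * Lbasis w n \<in> carrier_mat (2*n+1) (2*n+1)" by (rule conj_carrier[OF c])
  have Mx: "(Lbasis_inv w n * c * Lbasis w n) *\<^sub>v x \<in> carrier_vec (2*n+1)" using mult_mat_vec_carrier[OF M x] .
  have Lx: "Lbasis w n *\<^sub>v x \<in> carrier_vec (2*n+1)" using mult_mat_vec_carrier[OF Lbasis_carrier x] .
  fix i assume "i < dim_vec (Lbasis w n *\<^sub>v ((Lbasis_inv w n * c * Lbasis w n) *\<^sub>v x))"
  then have i: "i < 2*n+1" by simp
  have "(c *\<^sub>v (Lbasis w n *\<^sub>v x)) $ i = (\<Sum>k = 0..<2*n+1. c $$ (i,k) * (Lbasis w n *\<^sub>v x) $ k)"
    using c Lx i by (auto simp: scalar_prod_def intro!: sum.cong)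
  also have "\<dots> = (\<Sum>k = 0..<2*n+1. c $$ (i,k) * lw w n k * x $ k)"
    by (rule sum.cong[OF refl]) (use Lb_mult_vec[OF x] in auto)
  also have "\<dots> = lw w n i * (li w n i * (\<Sum>k = 0..<2*n+1. c $$ (i,k) * lw w n k * x $ k))"
    using w0 by (simp add: lw_def li_def)
  also have "\<dots> = (Lbasis w n *\<^sub>v ((Lbasis_inv w n * c * Lbasis w n) *\<^sub>v x)) $ i"
    using Lb_mult_vec[OF Mx i] conj_mult_vec[OF c x i] by simp
  finally show "(c *\<^sub>v (Lbasis w n *\<^sub>v x)) $ i = (Lbasis w n *\<^sub>v ((Lbasis_inv w n * c * Lbasis w n) *\<^sub>v x)) $ i" .
qed (use c in simp)

lemma orth_U:
  assumes n: "0 < n" and cS: "c \<in> SO_odd n" and cL: "(\<lambda>x. c *\<^sub>v x) ` lattice_L v n \<subseteq> lattice_L v n"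
  and y: "y \<in> carrier_vec (2*n)"
  shows "QK n (mat_delete (rmat (Lbasis_inv w n * c * Lbasis w n)) n n *\<^sub>v y) = QK n y"
proof -
  let ?M = "Lbasis_inv w n * c * Lbasis w n"
  let ?A = "rmat ?M"
  let ?U = "mat_delete ?A n n"
  have c: "c \<in> carrier_mat (2*n+1) (2*n+1)" using cS SO_carrier by blast
  have M: "?M \<in> carrier_mat (2*n+1) (2*n+1)" by (rule conj_carrier[OF c])
  have A: "?A \<in> carrier_mat (Suc (2*n)) (Suc (2*n))" using M by (simp add: rmat_def)
  have U: "?U \<in> carrier_mat (2*n) (2*n)" using mat_delete_carrier'[OF A] .
  have MO: "\<And>i j. i < 2*n+1 \<Longrightarrow> j < 2*n+1 \<Longrightarrow> ?M $$ (i,j) \<in> Oring v"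
    by (rule conj_integral[OF c cL])
  define y' where "y' = vec (2*n+1) (\<lambda>i. if i = n then 0 else y $ (if i < n then i else i - 1))"
  define xl where "xl = vec (2*n+1) (\<lambda>i. SOME a. a \<in> Oring v \<and> res a = y' $ i)"
  have y'c: "y' \<in> carrier_vec (2*n+1)" unfolding y'_def by simp
  have xlc: "xl \<in> carrier_vec (2*n+1)" unfolding xl_def by simp
  have xlp: "xl $ i \<in> Oring v \<and> res (xl $ i) = y' $ i" if i: "i < 2*n+1" for i
  proof -
    have ex: "\<exists>a. a \<in> Oring v \<and> res a = y' $ i" using res_surj by blast
    have "(SOME a. a \<in> Oring v \<and> res a = y' $ i) \<in> Oring v \<and> res (SOME a. a \<in> Oring v \<and> res a = y' $ i) = y' $ i"
      by (rule someI_ex[OF ex])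
    then show ?thesis unfolding xl_def using i by simp
  qed
  define u where "u = ?M *\<^sub>v xl"
  have uc: "u \<in> carrier_vec (2*n+1)" unfolding u_def using mult_mat_vec_carrier[OF M xlc] .
  have ui: "u $ i = (\<Sum>k = 0..<2*n+1. ?M $$ (i,k) * xl $ k)" if i: "i < 2*n+1" for i
    unfolding u_def using M xlc i by (auto simp: scalar_prod_def intro!: sum.cong)
  have uO: "u $ i \<in> Oring v" if i: "i < 2*n+1" for i
    unfolding ui[OF i] using MO i xlp by (intro O_sum O_mult) auto
  have ures: "res (u $ i) = (?A *\<^sub>v y') $ i" if i: "i < 2*n+1" for i
  proof -
    have "res (u $ i) = (\<Sum>k = 0..<2*n+1. res (?M $$ (i,k) * xl $ k))"
      unfolding ui[OF i] by (rule res_sum) (meson O_mult MO i xlp atLeastLessThan_iff)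
    also have "\<dots> = (\<Sum>k = 0..<2*n+1. res (?M $$ (i,k)) * res (xl $ k))"
      by (rule sum.cong[OF refl]) (meson res_mult MO i xlp atLeastLessThan_iff)
    also have "\<dots> = (\<Sum>k = 0..<2*n+1. ?A $$ (i,k) * y' $ k)"
      using M i xlp by (intro sum.cong) (auto simp: rmat_def)
    also have "\<dots> = (?A *\<^sub>v y') $ i" using A y'c i by (auto simp: scalar_prod_def intro!: sum.cong)
    finally show ?thesis .
  qed
  let ?QL = "\<lambda>t. (\<Sum>i<n. t $ i * t $ (2*n-i)) + w * (t $ n * t $ n)"
  have Lxl: "Lbasis w n *\<^sub>v xl \<in> carrier_vec (2*n+1)" using mult_mat_vec_carrier[OF Lbasis_carrier xlc] .
  have "qform n (c *\<^sub>v (Lbasis w n *\<^sub>v xl)) = qform n (Lbasis w n *\<^sub>v xl)"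
    using cS Lxl unfolding SO_odd_def by blast
  then have "w * ?QL u = w * ?QL xl"
    unfolding c_Lb[OF c xlc] u_def[symmetric] qform_Lb[OF uc] qform_Lb[OF xlc] .
  then have QLeq: "?QL u = ?QL xl" using w0 by simp
  have resQL: "res (?QL t) = (\<Sum>i<n. res (t $ i) * res (t $ (2*n-i)))"
    if tO: "\<And>i. i < 2*n+1 \<Longrightarrow> t $ i \<in> Oring v" for t
  proof -
    have s: "(\<Sum>i<n. t $ i * t $ (2*n-i)) \<in> Oring v" using tO by (intro O_sum O_mult) auto
    have tn: "t $ n \<in> Oring v" using tO by simp
    have r2: "res (w * (t $ n * t $ n)) = 0" using res_mult[OF w_O O_mult[OF tn tn]] res_w by simp
    have "res (?QL t) = res (\<Sum>i<n. t $ i * t $ (2*n-i)) + res (w * (t $ n * t $ n))"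
      using s tn by (intro res_add O_mult w_O) auto
    also have "res (\<Sum>i<n. t $ i * t $ (2*n-i)) = (\<Sum>i<n. res (t $ i) * res (t $ (2*n-i)))"
      using tO by (subst res_sum) (auto intro!: O_mult res_mult sum.cong)
    finally show ?thesis using r2 by simp
  qed
  have keq: "(\<Sum>i<n. (?A *\<^sub>v y') $ i * (?A *\<^sub>v y') $ (2*n-i)) = (\<Sum>i<n. y' $ i * y' $ (2*n-i))"
  proof -
    have "(\<Sum>i<n. (?A *\<^sub>v y') $ i * (?A *\<^sub>v y') $ (2*n-i)) = res (?QL u)"
      using resQL[of u] uO ures by simp
    also have "\<dots> = res (?QL xl)" using QLeq by simp
    also have "\<dots> = (\<Sum>i<n. y' $ i * y' $ (2*n-i))"
      using resQL[of xl] xlp by simp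
    finally show ?thesis .
  qed
  have y'ins: "y' $ ins n k = y $ k" if k: "k < 2*n" for k
    using k unfolding y'_def ins_def by auto
  have Uy: "(?U *\<^sub>v y) $ i = (?A *\<^sub>v y') $ ins n i" if i: "i < 2*n" for i
  proof -
    have insi: "ins n i < Suc (2*n)" using i unfolding ins_def by auto
    have "(?A *\<^sub>v y') $ ins n i = (\<Sum>k = 0..<Suc (2*n). ?A $$ (ins n i, k) * y' $ k)"
      using A y'c insi by (auto simp: scalar_prod_def intro!: sum.cong)
    also have "\<dots> = ?A $$ (ins n i, n) * y' $ n + (\<Sum>k = 0..<2*n. ?A $$ (ins n i, ins n k) * y' $ ins n k)"
      by (rule sum_ins) simp
    also have "\<dots> = (\<Sum>k = 0..<2*n. ?U $$ (i, k) * y $ k)"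
      using mat_delete_idx[OF A i] y'ins by (simp add: y'_def)
    also have "\<dots> = (?U *\<^sub>v y) $ i"
      using mult_vec_idx[OF U y i] by simp
    finally show ?thesis by simp
  qed
  have "QK n (?U *\<^sub>v y) = (\<Sum>i<n. (?A *\<^sub>v y') $ i * (?A *\<^sub>v y') $ (2*n-i))"
    unfolding QK_def
  proof (rule sum.cong[OF refl])
    fix i assume i: "i \<in> {..<n}"
    have "ins n i = i" "ins n (2*n-1-i) = 2*n-i" using i unfolding ins_def by auto
    then show "(?U *\<^sub>v y) $ i * (?U *\<^sub>v y) $ (2*n-1-i) = (?A *\<^sub>v y') $ i * (?A *\<^sub>v y') $ (2*n-i)"
      using Uy[of i] Uy[of "2*n-1-i"] i by simp
  qed
  also have "\<dots> = (\<Sum>i<n. y' $ i * y' $ (2*n-i))" by (rule keq)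
  also have "\<dots> = QK n y"
    unfolding QK_def
  proof (rule sum.cong[OF refl])
    fix i assume i: "i \<in> {..<n}"
    have "ins n i = i" "ins n (2*n-1-i) = 2*n-i" using i unfolding ins_def by auto
    then show "y' $ i * y' $ (2*n-i) = y $ i * y $ (2*n-1-i)"
      using y'ins[of i] y'ins[of "2*n-1-i"] i by simp
  qed
  finally show ?thesis .
qed

end

(* ---- M7 ---- *)


context nlf
begin

lemma decomp_main:
  assumes n: "0 < n" and b: "b \<in> Borel n" and j: "j \<in> J_stab v n" and gbj: "gmat w n = b * j"
  shows "\<exists>U. U \<in> carrier_mat (2*n) (2*n) \<and> (\<forall>i<2*n. \<forall>k<i. U $$ (i,k) = 0) \<and>
    (\<forall>y \<in> carrier_vec (2*n). QK n (U *\<^sub>v y) = QK n y) \<and>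
    red_bar res w n j = U * swaprows_mat (2*n) 0 (2*n-1)"
proof -
  let ?g = "gmat w n"
  let ?N = "2*n+1"
  have jS: "j \<in> SO_odd n" and jL: "(\<lambda>x. j *\<^sub>v x) ` lattice_L v n = lattice_L v n"
    using j unfolding J_stab_def by auto
  have bS: "b \<in> SO_odd n" and but: "\<forall>i < ?N. \<forall>k < i. b $$ (i,k) = 0"
    using b unfolding Borel_def by auto
  have gS: "?g \<in> SO_odd n" by (rule g_SO[OF n w0])
  have gL: "(\<lambda>x. ?g *\<^sub>v x) ` lattice_L v n = lattice_L v n" by (rule g_image_L[OF n])
  have bc: "b \<in> carrier_mat ?N ?N" and jc: "j \<in> carrier_mat ?N ?N" and gc: "?g \<in> carrier_mat ?N ?N"
    using bS jS SO_carrier by auto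
  define c where "c = j * ?g"
  have cc: "c \<in> carrier_mat ?N ?N" unfolding c_def using mult_carrier_mat[OF jc gc] .
  have cS: "c \<in> SO_odd n" unfolding c_def by (rule SO_mult[OF jS gS])
  have cL: "(\<lambda>x. c *\<^sub>v x) ` lattice_L v n = lattice_L v n" unfolding c_def by (rule image_L_mult[OF jc gc jL gL])
  have gg: "?g * ?g = 1\<^sub>m ?N" by (rule g_g[OF n w0])
  have bc1: "b * c = 1\<^sub>m ?N"
  proof -
    have "b * c = (b * j) * ?g" unfolding c_def by (rule assoc_mult_mat[OF bc jc gc, symmetric])
    also have "\<dots> = 1\<^sub>m ?N" using gbj gg by simp
    finally show ?thesis .
  qed
  have cb1: "c * b = 1\<^sub>m ?N" by (rule mat_mult_left_right_inverse[OF bc cc bc1])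
  have utb: "upper_triangular b" unfolding upper_triangular_def using but bc by auto
  have "det b = (\<Prod>i = 0..<?N. b $$ (i,i))"
    using det_upper_triangular[OF utb bc] bc by (simp add: prod_list_diag_prod)
  then have "(\<Prod>i = 0..<?N. b $$ (i,i)) = 1" using bS unfolding SO_odd_def by simp
  then have diag: "\<forall>i < ?N. b $$ (i,i) \<noteq> 0"
  proof (intro allI impI notI)
    fix i assume p: "(\<Prod>i = 0..<?N. b $$ (i,i)) = 1" and i: "i < ?N" and z: "b $$ (i,i) = 0"
    have "(\<Prod>i = 0..<?N. b $$ (i,i)) = 0" by (rule prod_zero) (use i z in auto)
    then show False using p by (metis zero_neq_one)
  qed
  have cut: "\<forall>i < ?N. \<forall>k < i. c $$ (i,k) = 0" by (rule inv_upper[OF bc cc but diag cb1])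
  have jcg: "c * ?g = j"
  proof -
    have "c * ?g = j * (?g * ?g)" unfolding c_def by (rule assoc_mult_mat[OF jc gc gc])
    also have "\<dots> = j" using gg jc by simp
    finally show ?thesis .
  qed
  let ?M = "Lbasis_inv w n * c * Lbasis w n"
  let ?Mg = "Lbasis_inv w n * ?g * Lbasis w n"
  have M: "?M \<in> carrier_mat ?N ?N" by (rule conj_carrier[OF cc])
  have Mg: "?Mg \<in> carrier_mat ?N ?N" by (rule conj_carrier[OF gc])
  have Mprod: "Lbasis_inv w n * j * Lbasis w n = ?M * ?Mg"
  proof (rule eq_matI)
    fix i k assume i: "i < dim_row (?M * ?Mg)" and k: "k < dim_col (?M * ?Mg)"
    then have i': "i < ?N" and k': "k < ?N" using M Mg by auto
    have "(?M * ?Mg) $$ (i,k) = (\<Sum>l = 0..<?N. ?M $$ (i,l) * ?Mg $$ (l,k))"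
      using M Mg i' k' by (simp add: scalar_prod_def)
    also have "\<dots> = (\<Sum>l = 0..<?N. li w n i * (c $$ (i,l) * ?g $$ (l,k)) * lw w n k)"
    proof (rule sum.cong[OF refl])
      fix l assume l: "l \<in> {0..<?N}"
      have e1: "?M $$ (i,l) = li w n i * c $$ (i,l) * lw w n l" using conj_entry[OF cc i'] l by simp
      have e2: "?Mg $$ (l,k) = li w n l * ?g $$ (l,k) * lw w n k" using conj_entry[OF gc _ k'] l by simp
      have "lw w n l * li w n l = 1" using w0 by (simp add: lw_def li_def)
      then show "?M $$ (i,l) * ?Mg $$ (l,k) = li w n i * (c $$ (i,l) * ?g $$ (l,k)) * lw w n k"
        unfolding e1 e2 by (metis (no_types, lifting) mult.assoc mult.left_commute mult_1)
    qed
    also have "\<dots> = li w n i * (\<Sum>l = 0..<?N. c $$ (i,l) * ?g $$ (l,k)) * lw w n k"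
      by (simp only: sum_distrib_left sum_distrib_right)
    also have "(\<Sum>l = 0..<?N. c $$ (i,l) * ?g $$ (l,k)) = (c * ?g) $$ (i,k)"
      using cc gc i' k' by (simp add: scalar_prod_def)
    also have "li w n i * (c * ?g) $$ (i,k) * lw w n k = (Lbasis_inv w n * j * Lbasis w n) $$ (i,k)"
      using conj_entry[OF jc i' k'] jcg by simp
    finally show "(Lbasis_inv w n * j * Lbasis w n) $$ (i,k) = (?M * ?Mg) $$ (i,k)" by simp
  qed (use M Mg jc in auto)
  have MO: "\<forall>i<?N. \<forall>k<?N. ?M $$ (i,k) \<in> Oring v"
    using conj_integral[OF cc] cL by auto
  have MgO: "\<forall>i<?N. \<forall>k<?N. ?Mg $$ (i,k) \<in> Oring v"
    using conj_integral[OF gc] gL by auto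
  have rM: "rmat ?M \<in> carrier_mat (Suc (2*n)) (Suc (2*n))" using M by (simp add: rmat_def)
  have rMg: "rmat ?Mg \<in> carrier_mat (Suc (2*n)) (Suc (2*n))" using Mg by (simp add: rmat_def)
  define U where "U = mat_delete (rmat ?M) n n"
  have Uc: "U \<in> carrier_mat (2*n) (2*n)" unfolding U_def using mat_delete_carrier'[OF rM] .
  have red: "red_bar res w n j = U * swaprows_mat (2*n) 0 (2*n-1)"
  proof -
    have "red_bar res w n j = mat_delete (rmat (?M * ?Mg)) n n"
      unfolding red_bar_def Mprod rmat_def ..
    also have "\<dots> = mat_delete (rmat ?M * rmat ?Mg) n n"
      using rmat_mult[OF M Mg MO MgO] by simp
    also have "\<dots> = mat_delete (rmat ?M) n n * mat_delete (rmat ?Mg) n n"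
    proof (rule mat_delete_mult[OF rM rMg])
      show "n < Suc (2*n)" by simp
      fix k assume k: "k < Suc (2*n)" "k \<noteq> n"
      show "rmat ?Mg $$ (n, k) = 0" using rPg_entry[OF n, of n k] k n by (simp add: gs_def)
    qed
    finally show ?thesis unfolding U_def P_eq[OF n] .
  qed
  have Uut: "\<forall>i<2*n. \<forall>k<i. U $$ (i,k) = 0"
  proof (intro allI impI)
    fix i k assume i: "i < 2*n" and ki: "k < i"
    have k: "k < 2*n" using i ki by simp
    have "U $$ (i,k) = rmat ?M $$ (ins n i, ins n k)" unfolding U_def by (rule mat_delete_idx[OF rM i k])
    also have "\<dots> = res (?M $$ (ins n i, ins n k))"
      using M i k by (simp add: rmat_def ins_def)
    also have "?M $$ (ins n i, ins n k) = li w n (ins n i) * c $$ (ins n i, ins n k) * lw w n (ins n k)"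
      by (rule conj_entry[OF cc]) (use i k in \<open>auto simp: ins_def\<close>)
    also have "c $$ (ins n i, ins n k) = 0" using cut i ki unfolding ins_def by auto
    finally show "U $$ (i,k) = 0" by simp
  qed
  have Uorth: "\<forall>y \<in> carrier_vec (2*n). QK n (U *\<^sub>v y) = QK n y"
    unfolding U_def using orth_U[OF n cS] cL by auto
  show ?thesis using Uc Uut Uorth red by blast
qed

end

(* ---- M8 ---- *)


lemma card_vec:
  assumes fin: "finite (UNIV :: 'k set)"
  shows "card (carrier_vec N :: 'k vec set) = card (UNIV :: 'k set) ^ N"
proof -
  have im: "carrier_vec N = (\<lambda>f. vec N f) ` (PiE {..<N} (\<lambda>_. (UNIV :: 'k set)))"
  proof
    show "carrier_vec N \<subseteq> (\<lambda>f. vec N f) ` (PiE {..<N} (\<lambda>_. (UNIV :: 'k set)))"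
    proof
      fix x :: "'k vec" assume x: "x \<in> carrier_vec N"
      have "x = vec N (restrict (\<lambda>i. x $ i) {..<N})" using x by (auto intro!: eq_vecI)
      moreover have "restrict (\<lambda>i. x $ i) {..<N} \<in> PiE {..<N} (\<lambda>_. UNIV)" by auto
      ultimately show "x \<in> (\<lambda>f. vec N f) ` (PiE {..<N} (\<lambda>_. (UNIV :: 'k set)))" by blast
    qed
  qed auto
  have inj: "inj_on (\<lambda>f. vec N f) (PiE {..<N} (\<lambda>_. (UNIV :: 'k set)))"
  proof (rule inj_onI)
    fix f g assume f: "f \<in> PiE {..<N} (\<lambda>_. (UNIV :: 'k set))" and g: "g \<in> PiE {..<N} (\<lambda>_. (UNIV :: 'k set))"
      and e: "vec N f = vec N g"
    have "\<forall>i<N. f i = g i" using e by (metis index_vec)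
    then show "f = g" using f g by (intro PiE_ext) auto
  qed
  have "card (carrier_vec N :: 'k vec set) = card (PiE {..<N} (\<lambda>_. (UNIV :: 'k set)))"
    unfolding im by (rule card_image[OF inj])
  also have "\<dots> = card (UNIV :: 'k set) ^ N" by (simp add: card_PiE)
  finally show ?thesis .
qed

lemma image_kernel_card:
  assumes A: "(A :: 'k::field mat) \<in> carrier_mat m N"
  shows "card (carrier_vec N :: 'k vec set) = card ((\<lambda>x. A *\<^sub>v x) ` carrier_vec N) * card {x \<in> carrier_vec N. A *\<^sub>v x = 0\<^sub>v m}"
proof -
  define s where "s y = (SOME x. x \<in> carrier_vec N \<and> A *\<^sub>v x = y)" for y
  have sp: "s y \<in> carrier_vec N \<and> A *\<^sub>v s y = y" if y: "y \<in> (\<lambda>x. A *\<^sub>v x) ` carrier_vec N" for y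
  proof -
    have "\<exists>x. x \<in> carrier_vec N \<and> A *\<^sub>v x = y" using y by auto
    then show ?thesis unfolding s_def by (rule someI_ex)
  qed
  let ?I = "(\<lambda>x. A *\<^sub>v x) ` carrier_vec N"
  let ?K = "{x \<in> carrier_vec N. A *\<^sub>v x = 0\<^sub>v m}"
  have bij: "bij_betw (\<lambda>x. (A *\<^sub>v x, x - s (A *\<^sub>v x))) (carrier_vec N) (?I \<times> ?K)"
  proof (rule bij_betw_byWitness[where f' = "\<lambda>(y, k). s y + k"])
    show "\<forall>x\<in>carrier_vec N. (\<lambda>(y, k). s y + k) (A *\<^sub>v x, x - s (A *\<^sub>v x)) = x"
    proof
      fix x :: "'k vec" assume x: "x \<in> carrier_vec N"
      have "s (A *\<^sub>v x) \<in> carrier_vec N" using sp x by blast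
      then show "(\<lambda>(y, k). s y + k) (A *\<^sub>v x, x - s (A *\<^sub>v x)) = x" using x by (auto intro!: eq_vecI)
    qed
    show "\<forall>p\<in>?I \<times> ?K. (\<lambda>x. (A *\<^sub>v x, x - s (A *\<^sub>v x))) ((\<lambda>(y, k). s y + k) p) = p"
    proof
      fix p assume p: "p \<in> ?I \<times> ?K"
      obtain y k where pd: "p = (y, k)" by (cases p)
      have y: "y \<in> ?I" and k: "k \<in> carrier_vec N" "A *\<^sub>v k = 0\<^sub>v m" using p pd by auto
      have sy: "s y \<in> carrier_vec N" "A *\<^sub>v s y = y" using sp[OF y] by auto
      have yc: "y \<in> carrier_vec m" using y A by auto
      have "A *\<^sub>v (s y + k) = A *\<^sub>v s y + A *\<^sub>v k" using A sy k by (simp add: mult_add_distrib_mat_vec)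
      then have e: "A *\<^sub>v (s y + k) = y" using sy k yc by simp
      have "s y + k - s y = k" using sy k by (auto intro!: eq_vecI)
      then show "(\<lambda>x. (A *\<^sub>v x, x - s (A *\<^sub>v x))) ((\<lambda>(y, k). s y + k) p) = p" unfolding pd using e by simp
    qed
    show "(\<lambda>x. (A *\<^sub>v x, x - s (A *\<^sub>v x))) ` carrier_vec N \<subseteq> ?I \<times> ?K"
    proof (rule image_subsetI)
      fix x :: "'k vec" assume x: "x \<in> carrier_vec N"
      have sy: "s (A *\<^sub>v x) \<in> carrier_vec N" "A *\<^sub>v s (A *\<^sub>v x) = A *\<^sub>v x" using sp x by auto
      have "A *\<^sub>v (x - s (A *\<^sub>v x)) = A *\<^sub>v x - A *\<^sub>v s (A *\<^sub>v x)"
        using A x sy by (simp add: mult_minus_distrib_mat_vec)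
      also have "\<dots> = 0\<^sub>v m" using sy A x by simp
      finally show "(A *\<^sub>v x, x - s (A *\<^sub>v x)) \<in> ?I \<times> ?K" using x sy by auto
    qed
    show "(\<lambda>(y, k). s y + k) ` (?I \<times> ?K) \<subseteq> carrier_vec N"
      using sp by auto
  qed
  then have "card (carrier_vec N :: 'k vec set) = card (?I \<times> ?K)" by (rule bij_betw_same_card)
  then show ?thesis by (simp add: card_cartesian_product)
qed

context vec_space
begin

lemma card_span_li:
  assumes fin: "finite (UNIV :: 'a set)" and S: "finite S" and Sc: "S \<subseteq> carrier_vec n" and li: "lin_indpt S"
  shows "card (span S) = card (UNIV :: 'a set) ^ card S"
proof -
  have sp: "span S = (\<lambda>a. lincomb a S) ` (S \<rightarrow>\<^sub>E UNIV)"
  proof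
    show "span S \<subseteq> (\<lambda>a. lincomb a S) ` (S \<rightarrow>\<^sub>E UNIV)"
    proof
      fix u assume "u \<in> span S"
      then obtain a where u: "u = lincomb a S" using finite_span[OF S] Sc by auto
      have "lincomb a S = lincomb (restrict a S) S" using Sc by (intro lincomb_cong) auto
      then show "u \<in> (\<lambda>a. lincomb a S) ` (S \<rightarrow>\<^sub>E UNIV)" using u by auto
    qed
    show "(\<lambda>a. lincomb a S) ` (S \<rightarrow>\<^sub>E UNIV) \<subseteq> span S"
      using finite_span[OF S] Sc by auto
  qed
  have inj: "inj_on (\<lambda>a. lincomb a S) (S \<rightarrow>\<^sub>E UNIV)"
  proof (rule inj_onI)
    fix a b assume a: "a \<in> S \<rightarrow>\<^sub>E UNIV" and b: "b \<in> S \<rightarrow>\<^sub>E UNIV" and e: "lincomb a S = lincomb b S"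
    have "lincomb (\<lambda>v. a v - b v) S = lincomb a S \<ominus>\<^bsub>V\<^esub> lincomb b S"
      using lincomb_diff[OF S Sc, of a b] by simp
    also have "\<dots> = 0\<^sub>v n" unfolding e using lincomb_closed[OF Sc, of b] by (simp add: M.r_neg M.minus_eq)
    finally have "(\<lambda>v. a v - b v) \<in> S \<rightarrow> {0}"
      using not_lindepD[OF li S] by auto
    then show "a = b" using a b by (intro PiE_ext) auto
  qed
  have "card (span S) = card (S \<rightarrow>\<^sub>E (UNIV :: 'a set))" unfolding sp by (rule card_image[OF inj])
  also have "\<dots> = card (UNIV :: 'a set) ^ card S" using S by (simp add: card_PiE)
  finally show ?thesis .
qed


lemma card_cols_span:
  assumes fin: "finite (UNIV :: 'a set)" and A: "A \<in> carrier_mat n nc"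
  shows "card (span (set (cols A))) = card (UNIV :: 'a set) ^ rank A"
proof -
  let ?P = "\<lambda>T. T \<subseteq> set (cols A) \<and> lin_indpt T"
  have colc: "set (cols A) \<subseteq> carrier_vec n" using cols_dim[of A] A by auto
  have P0: "?P {}" unfolding lin_dep_def by auto
  obtain S where Sf: "finite S" and Sm: "maximal S ?P"
    using maximal_exists_superset[of "set (cols A)" ?P "{}"] P0 by blast
  have rk: "rank A = card S" by (rule rank_card_indpt[OF A Sm])
  have SP: "S \<subseteq> set (cols A)" "lin_indpt S" using Sm unfolding maximal_def by auto
  have Sc: "S \<subseteq> carrier_vec n" using SP colc by auto
  have "span S = span (set (cols A))"
  proof
    show "span S \<subseteq> span (set (cols A))" using SP(1) colc by (intro span_is_monotone)
    have "set (cols A) \<subseteq> span S"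
    proof
      fix s assume s: "s \<in> set (cols A)"
      show "s \<in> span S"
      proof (cases "s \<in> S")
        case True then show ?thesis using Sc by (intro span_mem)
      next
        case False
        have "\<not> ?P (S \<union> {s})"
        proof
          assume "?P (S \<union> {s})"
          then have "S \<union> {s} = S" using Sm unfolding maximal_def by blast
          then show False using False by auto
        qed
        then have "lin_dep (S \<union> {s})" using SP s by auto
        then show ?thesis using lin_dep_iff_in_span[OF Sc SP(2) _ False] s colc by auto
      qed
    qed
    then show "span (set (cols A)) \<subseteq> span S"
      using span_is_subset[OF _ span_is_submodule[OF Sc]] by blast
  qed
  then have "card (span (set (cols A))) = card (span S)" by simp
  also have "\<dots> = card (UNIV :: 'a set) ^ card S" by (rule card_span_li[OF fin Sf Sc SP(2)])
  finally show ?thesis using rk by simp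
qed

lemma rank_kernel_card:
  assumes fin: "finite (UNIV :: 'a set)" and A: "A \<in> carrier_mat n n"
  shows "card (UNIV :: 'a set) ^ n = card (UNIV :: 'a set) ^ rank A * card {x \<in> carrier_vec n. A *\<^sub>v x = 0\<^sub>v n}"
proof -
  have "span (set (cols A)) = (\<lambda>x. A *\<^sub>v x) ` carrier_vec n"
    using col_space_eq[OF A] A unfolding col_space_def by auto
  then show ?thesis using image_kernel_card[OF A] card_vec[OF fin, of n] card_cols_span[OF fin A] by simp
qed

end

(* ---- M9 ---- *)


definition sw :: "nat \<Rightarrow> nat \<Rightarrow> nat" where
  "sw n i = (if i = 0 then 2*n-1 else if i = 2*n-1 then 0 else i)"

lemma sw_lt: "0 < n \<Longrightarrow> i < 2*n \<Longrightarrow> sw n i < 2*n" unfolding sw_def by auto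
lemma sw_sw: "0 < n \<Longrightarrow> i < 2*n \<Longrightarrow> sw n (sw n i) = i" unfolding sw_def by auto

lemma swap_mult_vec:
  assumes n: "0 < n" and x: "(x :: 'a::comm_ring_1 vec) \<in> carrier_vec (2*n)" and i: "i < 2*n"
  shows "(swaprows_mat (2*n) 0 (2*n-1) *\<^sub>v x) $ i = x $ sw n i"
proof -
  have c: "swaprows_mat (2*n) 0 (2*n-1) \<in> carrier_mat (2*n) (2*n)" unfolding swaprows_mat_def by simp
  have "(swaprows_mat (2*n) 0 (2*n-1) *\<^sub>v x) $ i = (\<Sum>k = 0..<2*n. (if k = sw n i then 1 else 0) * x $ k)"
    using mult_vec_idx[OF c x i] i n by (auto simp: swaprows_mat_def sw_def intro!: sum.cong)
  also have "\<dots> = x $ sw n i" using sum_single[OF sw_lt[OF n i], of 1 "\<lambda>k. x $ k"] by simp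
  finally show ?thesis .
qed

context nlf
begin

definition Uf :: "'k mat \<Rightarrow> nat \<Rightarrow> nat \<Rightarrow> nat \<Rightarrow> 'k" where
  "Uf U n i k = (if i < 2*n \<and> k < 2*n then U $$ (i,k) else 0)"

lemma core_Uf:
  assumes Uc: "U \<in> carrier_mat (2*n) (2*n)" and Uut: "\<forall>i<2*n. \<forall>k<i. U $$ (i,k) = 0"
  and Uorth: "\<forall>y \<in> carrier_vec (2*n). QK n (U *\<^sub>v y) = QK n y"
  shows "core (Uf U n) n"
proof (unfold_locales)
  show "finite (UNIV :: 'k set)" by (rule fin_k)
  show "\<And>i j. j < i \<Longrightarrow> Uf U n i j = 0" using Uut unfolding Uf_def by auto
  fix x :: "nat \<Rightarrow> 'k" assume x: "x \<in> Midset n 0"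
  let ?y = "vec (2*n) x"
  have yc: "?y \<in> carrier_vec (2*n)" by simp
  have e: "(U *\<^sub>v ?y) $ i = mv n (Uf U n) x i" if i: "i < 2*n" for i
    using mult_vec_idx[OF Uc yc i] i unfolding mv_def Uf_def by (auto simp: atLeast0LessThan intro!: sum.cong)
  have "Qf n (mv n (Uf U n) x) = QK n (U *\<^sub>v ?y)"
    unfolding Qf_def QK_def by (rule sum.cong[OF refl]) (auto simp: e)
  also have "\<dots> = QK n ?y" using Uorth yc by blast
  also have "\<dots> = Qf n x" unfolding Qf_def QK_def by (rule sum.cong[OF refl]) auto
  finally show "Qf n (mv n (Uf U n) x) = Qf n x" .
qed


lemma detU:
  assumes n: "0 < n" and Uc: "(U :: 'k mat) \<in> carrier_mat (2*n) (2*n)" and Uut: "\<forall>i<2*n. \<forall>k<i. U $$ (i,k) = 0"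
  and Uorth: "\<forall>y \<in> carrier_vec (2*n). QK n (U *\<^sub>v y) = QK n y"
  shows "det U = 1"
proof -
  have co: "core (Uf U n) n" by (rule core_Uf[OF Uc Uut Uorth])
  have pair: "U $$ (a,a) * U $$ (2*n-1-a, 2*n-1-a) = 1" if a: "a < n" for a
  proof -
    have st: "step (Uf U n) n a" using co a by (simp add: step_def step_axioms_def)
    interpret st: step "Uf U n" n a by (rule st)
    have F: "st.tt * st.tt' = 1" by (rule st.F1)
    have b2: "st.Bi < 2*n" "a < 2*n" using st.Bi_facts a by auto
    have e1: "st.tt = U $$ (a,a)" unfolding st.tt_def Uf_def using b2 by simp
    have e2: "st.tt' = U $$ (st.Bi, st.Bi)" unfolding st.tt'_def Uf_def using b2 by simp
    have h1: "U $$ (a,a) * U $$ (st.Bi, st.Bi) = 1" using F unfolding e1 e2 .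
    from h1 show ?thesis by (simp only: st.Bi_def)
  qed
  have ut: "upper_triangular U" unfolding upper_triangular_def using Uut Uc by auto
  have "det U = (\<Prod>i = 0..<2*n. U $$ (i,i))"
    using det_upper_triangular[OF ut Uc] Uc by (simp add: prod_list_diag_prod)
  also have "\<dots> = (\<Prod>i = 0..<n. U $$ (i,i)) * (\<Prod>i = n..<2*n. U $$ (i,i))"
    by (rule prod.atLeastLessThan_concat[symmetric]) auto
  also have "(\<Prod>i = n..<2*n. U $$ (i,i)) = (\<Prod>a = 0..<n. U $$ (2*n-1-a, 2*n-1-a))"
  proof (rule prod.reindex_bij_witness[of _ "\<lambda>a. 2*n-1-a" "\<lambda>a. 2*n-1-a"])
    fix i assume i: "i \<in> {n..<2*n}"
    show "2*n-1-(2*n-1-i) = i" using i by auto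
    show "2*n-1-i \<in> {0..<n}" using i by auto
    show "U $$ (2*n-1-(2*n-1-i), 2*n-1-(2*n-1-i)) = U $$ (i,i)" using i by auto
  next
    fix a assume a: "a \<in> {0..<n}"
    show "2*n-1-(2*n-1-a) = a" using a by auto
    show "2*n-1-a \<in> {n..<2*n}" using a by auto
  qed
  also have "(\<Prod>i = 0..<n. U $$ (i,i)) * (\<Prod>a = 0..<n. U $$ (2*n-1-a, 2*n-1-a)) =
     (\<Prod>a = 0..<n. U $$ (a,a) * U $$ (2*n-1-a, 2*n-1-a))" by (simp add: prod.distrib)
  also have "\<dots> = 1" using pair by (intro prod.neutral) auto
  finally show ?thesis .
qed

lemma vec_minus_zero:
  assumes "(u :: 'b::ab_group_add vec) \<in> carrier_vec N" "x \<in> carrier_vec N"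
  shows "u - x = 0\<^sub>v N \<longleftrightarrow> u = x"
proof
  assume h: "u - x = 0\<^sub>v N"
  show "u = x"
  proof (rule eq_vecI)
    fix i assume "i < dim_vec x"
    then have i: "i < N" using assms by auto
    have "(u - x) $ i = 0" using h i by simp
    then show "u $ i = x $ i" using assms i by simp
  qed (use assms in auto)
qed (use assms in \<open>auto intro!: eq_vecI\<close>)

lemma Kv_card:
  assumes n: "0 < n" and Uc: "(U :: 'k mat) \<in> carrier_mat (2*n) (2*n)" and Uut: "\<forall>i<2*n. \<forall>k<i. U $$ (i,k) = 0"
  and Uorth: "\<forall>y \<in> carrier_vec (2*n). QK n (U *\<^sub>v y) = QK n y"
  shows "\<exists>e. card {x \<in> carrier_vec (2*n). (U * swaprows_mat (2*n) 0 (2*n-1) - 1\<^sub>m (2*n)) *\<^sub>v x = 0\<^sub>v (2*n)}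
     = card (UNIV :: 'k set) ^ (2*e+1)"
proof -
  let ?P = "swaprows_mat (2*n) 0 (2*n-1) :: 'k mat"
  have Pc: "?P \<in> carrier_mat (2*n) (2*n)" unfolding swaprows_mat_def by simp
  have co: "core (Uf U n) n" by (rule core_Uf[OF Uc Uut Uorth])
  obtain e where e: "card {x \<in> Midset n 0. mv n (Uf U n) x = pswap n x} = card (UNIV :: 'k set) ^ (2*e+1)"
    using core.top_card[OF co n] by blast
  let ?T = "{x \<in> Midset n 0. mv n (Uf U n) x = pswap n x}"
  let ?K = "{x \<in> carrier_vec (2*n). (U * ?P - 1\<^sub>m (2*n)) *\<^sub>v x = 0\<^sub>v (2*n)}"
  have Kchar: "(U * ?P - 1\<^sub>m (2*n)) *\<^sub>v x = 0\<^sub>v (2*n) \<longleftrightarrow> U *\<^sub>v (?P *\<^sub>v x) = x" if x: "x \<in> carrier_vec (2*n)" for x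
  proof -
    have UP: "U * ?P \<in> carrier_mat (2*n) (2*n)" using mult_carrier_mat[OF Uc Pc] .
    have "(U * ?P - 1\<^sub>m (2*n)) *\<^sub>v x = (U * ?P) *\<^sub>v x - 1\<^sub>m (2*n) *\<^sub>v x"
      using UP x by (simp add: minus_mult_distrib_mat_vec)
    also have "\<dots> = U *\<^sub>v (?P *\<^sub>v x) - x" using assoc_mult_mat_vec[OF Uc Pc x] x by simp
    finally have "(U * ?P - 1\<^sub>m (2*n)) *\<^sub>v x = U *\<^sub>v (?P *\<^sub>v x) - x" .
    moreover have "U *\<^sub>v (?P *\<^sub>v x) \<in> carrier_vec (2*n)" using mult_mat_vec_carrier[OF Uc mult_mat_vec_carrier[OF Pc x]] .
    ultimately show ?thesis using vec_minus_zero x by metis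
  qed
  have Pv: "(?P *\<^sub>v x) $ i = x $ sw n i" if "x \<in> carrier_vec (2*n)" "i < 2*n" for x i
    using swap_mult_vec[OF n that] .
  have mvU: "mv n (Uf U n) t i = (U *\<^sub>v vec (2*n) t) $ i" if i: "i < 2*n" for t i
    using mult_vec_idx[OF Uc _ i, of "vec (2*n) t"] i unfolding mv_def Uf_def
    by (auto simp: atLeast0LessThan intro!: sum.cong)
  have mv_hi: "mv n (Uf U n) t i = 0" if i: "2*n \<le> i" for t i
    using i unfolding mv_def Uf_def by simp
  have psw: "pswap n t i = t (sw n i)" for t i unfolding pswap_def sw_def by auto
  define phi where "phi x = (\<lambda>i. if i < 2*n then (?P *\<^sub>v x) $ i else 0)" for x
  define psi where "psi t = vec (2*n) (\<lambda>i. t (sw n i))" for t :: "nat \<Rightarrow> 'k"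
  have bij: "bij_betw phi ?K ?T"
  proof (rule bij_betw_byWitness[where f' = psi])
    show "\<forall>x\<in>?K. psi (phi x) = x"
    proof
      fix x assume x: "x \<in> ?K"
      then have xc: "x \<in> carrier_vec (2*n)" by simp
      show "psi (phi x) = x"
        unfolding psi_def phi_def using xc sw_lt[OF n] sw_sw[OF n] Pv[OF xc] by (auto intro!: eq_vecI)
    qed
    show "\<forall>t\<in>?T. phi (psi t) = t"
    proof
      fix t assume t: "t \<in> ?T"
      then have tm: "t \<in> Midset n 0" by simp
      have pc: "psi t \<in> carrier_vec (2*n)" unfolding psi_def by simp
      show "phi (psi t) = t"
      proof
        fix i show "phi (psi t) i = t i"
        proof (cases "i < 2*n")
          case True then show ?thesis unfolding phi_def using Pv[OF pc True] sw_lt[OF n True] sw_sw[OF n True]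
            by (simp add: psi_def)
        next
          case False then show ?thesis unfolding phi_def using tm by (simp add: Midset_def)
        qed
      qed
    qed
    show "phi ` ?K \<subseteq> ?T"
    proof (rule image_subsetI)
      fix x assume x: "x \<in> ?K"
      then have xc: "x \<in> carrier_vec (2*n)" and Ux: "U *\<^sub>v (?P *\<^sub>v x) = x" using Kchar by auto
      have Pxc: "?P *\<^sub>v x \<in> carrier_vec (2*n)" using mult_mat_vec_carrier[OF Pc xc] .
      have vphi: "vec (2*n) (phi x) = ?P *\<^sub>v x" unfolding phi_def using Pxc by (auto intro!: eq_vecI)
      have m: "phi x \<in> Midset n 0" unfolding phi_def Midset_def by auto
      have "mv n (Uf U n) (phi x) = pswap n (phi x)"
      proof
        fix i show "mv n (Uf U n) (phi x) i = pswap n (phi x) i"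
        proof (cases "i < 2*n")
          case True
          have "mv n (Uf U n) (phi x) i = x $ i" using mvU[OF True, of "phi x"] vphi Ux by simp
          moreover have "pswap n (phi x) i = x $ i"
            unfolding psw phi_def using True sw_lt[OF n True] Pv[OF xc] sw_sw[OF n True] by simp
          ultimately show ?thesis by simp
        next
          case False
          then show ?thesis using mv_hi[of i] unfolding pswap_def phi_def by auto
        qed
      qed
      then show "phi x \<in> ?T" using m by simp
    qed
    show "psi ` ?T \<subseteq> ?K"
    proof (rule image_subsetI)
      fix t assume t: "t \<in> ?T"
      then have tm: "t \<in> Midset n 0" and tt: "mv n (Uf U n) t = pswap n t" by auto
      have pc: "psi t \<in> carrier_vec (2*n)" unfolding psi_def by simp
      have Pp: "?P *\<^sub>v psi t = vec (2*n) t"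
        using Pv[OF pc] sw_lt[OF n] sw_sw[OF n] pc by (auto intro!: eq_vecI simp: psi_def)
      have "U *\<^sub>v (?P *\<^sub>v psi t) = psi t"
      proof (rule eq_vecI)
        fix i assume "i < dim_vec (psi t)"
        then have i: "i < 2*n" unfolding psi_def by simp
        show "(U *\<^sub>v (?P *\<^sub>v psi t)) $ i = psi t $ i"
          unfolding Pp using mvU[OF i, of t] tt psw[of t i] i by (simp add: psi_def)
      qed (use Uc pc in auto)
      then show "psi t \<in> ?K" using Kchar[OF pc] pc by simp
    qed
  qed
  then have "card ?K = card ?T" by (rule bij_betw_same_card)
  then show ?thesis using e by auto
qed

lemma q_ge2': "2 \<le> card (UNIV :: 'k set)"
proof -
  have "card {0::'k, 1} \<le> card (UNIV :: 'k set)" using fin_k by (intro card_mono) auto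
  then show ?thesis by simp
qed

lemma rank_odd:
  assumes n: "0 < n" and Uc: "(U :: 'k mat) \<in> carrier_mat (2*n) (2*n)" and Uut: "\<forall>i<2*n. \<forall>k<i. U $$ (i,k) = 0"
  and Uorth: "\<forall>y \<in> carrier_vec (2*n). QK n (U *\<^sub>v y) = QK n y"
  shows "vec_space.rank (2*n) (U * swaprows_mat (2*n) 0 (2*n-1) - 1\<^sub>m (2*n)) mod 2 = 1"
proof -
  let ?A = "U * swaprows_mat (2*n) 0 (2*n-1) - 1\<^sub>m (2*n)"
  have Pc: "swaprows_mat (2*n) 0 (2*n-1) \<in> carrier_mat (2*n) (2*n)" unfolding swaprows_mat_def by simp
  have Ac: "?A \<in> carrier_mat (2*n) (2*n)" by (rule minus_carrier_mat) simp
  obtain e where e: "card {x \<in> carrier_vec (2*n). ?A *\<^sub>v x = 0\<^sub>v (2*n)} = card (UNIV :: 'k set) ^ (2*e+1)"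
    using Kv_card[OF n Uc Uut Uorth] by blast
  have "card (UNIV :: 'k set) ^ (2*n) = card (UNIV :: 'k set) ^ vec_space.rank (2*n) ?A * card {x \<in> carrier_vec (2*n). ?A *\<^sub>v x = 0\<^sub>v (2*n)}"
    by (rule vec_space.rank_kernel_card[OF fin_k Ac])
  also have "\<dots> = card (UNIV :: 'k set) ^ (vec_space.rank (2*n) ?A + (2*e+1))" unfolding e by (simp add: power_add)
  finally have h: "card (UNIV :: 'k set) ^ (2*n) = card (UNIV :: 'k set) ^ (vec_space.rank (2*n) ?A + (2*e+1))" .
  have q1: "1 < card (UNIV :: 'k set)" using q_ge2' by simp
  have "2*n = vec_space.rank (2*n) ?A + (2*e+1)" using power_inject_exp[OF q1] h by metis
  then show ?thesis by presburger
qed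

end

theorem proposition3p7p9:
  fixes v :: "'a::field_char_0 \<Rightarrow> int" and res :: "'a \<Rightarrow> 'k::field"
    and w :: 'a and n :: nat
  assumes "nonarch_local_field_char0 v res"
    and "w \<noteq> 0" and "v w = 1"
    and "2*n+1 > 1"
  shows "{b * j | b j. b \<in> Borel n \<and> j \<in> J_plus v res w n} \<subset> SO_odd n"
proof -
  interpret nlf v res w using assms(1-3) by unfold_locales
  have n: "0 < n" using assms(4) by simp
  have sub: "{b * j | b j. b \<in> Borel n \<and> j \<in> J_plus v res w n} \<subseteq> SO_odd n"
  proof
    fix x assume "x \<in> {b * j | b j. b \<in> Borel n \<and> j \<in> J_plus v res w n}"
    then obtain b j where x: "x = b * j" and b: "b \<in> Borel n" and j: "j \<in> J_plus v res w n" by blast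
    have "b \<in> SO_odd n" using b unfolding Borel_def by auto
    moreover have "j \<in> SO_odd n" using j unfolding J_plus_def J_stab_def by auto
    ultimately show "x \<in> SO_odd n" unfolding x by (rule SO_mult)
  qed
  have notin: "gmat w n \<notin> {b * j | b j. b \<in> Borel n \<and> j \<in> J_plus v res w n}"
  proof
    assume "gmat w n \<in> {b * j | b j. b \<in> Borel n \<and> j \<in> J_plus v res w n}"
    then obtain b j where gbj: "gmat w n = b * j" and b: "b \<in> Borel n" and j: "j \<in> J_plus v res w n" by blast
    have jS: "j \<in> J_stab v n" using j unfolding J_plus_def by auto
    obtain U where Uc: "U \<in> carrier_mat (2*n) (2*n)" and Uut: "\<forall>i<2*n. \<forall>k<i. U $$ (i,k) = 0"
      and Uorth: "\<forall>y \<in> carrier_vec (2*n). QK n (U *\<^sub>v y) = QK n y"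
      and red: "red_bar res w n j = U * swaprows_mat (2*n) 0 (2*n-1)"
      using decomp_main[OF n b jS gbj] by blast
    have cond: "if (2::'k) \<noteq> 0 then det (red_bar res w n j) = 1 else dickson_inv (2*n) (red_bar res w n j) = 0"
      using j unfolding J_plus_def by auto
    show False
    proof (cases "(2::'k) \<noteq> 0")
      case True
      have Pc: "swaprows_mat (2*n) 0 (2*n-1) \<in> carrier_mat (2*n) (2*n)" unfolding swaprows_mat_def by simp
      have "det (red_bar res w n j) = det U * det (swaprows_mat (2*n) 0 (2*n-1) :: 'k mat)"
        unfolding red by (rule det_mult[OF Uc Pc])
      also have "det (swaprows_mat (2*n) 0 (2*n-1) :: 'k mat) = -1" using n by (intro det_swaprows_mat) auto
      also have "det U = 1" by (rule detU[OF n Uc Uut Uorth])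
      finally have "det (red_bar res w n j) = -1" by simp
      then have "(-1::'k) = 1" using cond True by simp
      then have "(2::'k) = 0" by (metis add_eq_0_iff one_add_one)
      then show False using True by simp
    next
      case False
      then have "dickson_inv (2*n) (red_bar res w n j) = 0" using cond by simp
      then show False using rank_odd[OF n Uc Uut Uorth] unfolding dickson_inv_def red by simp
    qed
  qed
  have "gmat w n \<in> SO_odd n" by (rule g_SO[OF n assms(2)])
  then show ?thesis using sub notin by blast
qed

end
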